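(* Let $\mathbf H$ be a Hopf submonoid of $\mathbf{GP}^+$ spanned by a family of extended generalized permutahedra, let $R$ be a (not necessarily commutative) ring with multiplication $m_R$, let $I=S_1\sqcup\cdots\sqcup S_k$ be a set decomposition, and for $1\le i\le k$ let $f_i:\mathbf H[S_i]\to R$ be linear maps that are strong valuations. Then the linear map $$m_R\circ(f_1\otimes f_2\otimes\cdots\otimes f_k)\circ\Delta_{S_1,\dots,S_k}:\mathbf H[I]\to R$$ is a strong valuation. Consequently, any finite sum of such maps is a strong valuation.
   Context: $\mathbf{GP}^+$ is the Hopf monoid of extended generalized permutahedra: $\mathbf{GP}^+[I]$ has basis the polyhedra $P=\{x\in\mathbb R^I:\sum_{i\in I}x_i=z(I),\ \sum_{i\in A}x_i\le z(A)\ \forall A\subseteq I\}$ with $z:2^I\to\mathbb R\cup\{\infty\}$ submodular on its finite values and $z(I)$ finite; product $m_{S,T}(P,Q)=P\times Q$; coproduct $\Delta_{S,T}(P)=P|_S\otimes P/_S$ where $P|_S\times P/_S$ ($P|_S\subseteq\mathbb R^S$, $P/_S\subseteq\mathbb R^T$) is the face of $P$ maximizing $\sum_{i\in S}x_i$ if this functional is bounded above on $P$, and $0$ otherwise. A Hopf submonoid is a subspecies closed under product and coproduct. $\Delta_{S_1,\dots,S_k}:\mathbf H[I]\to\mathbf H[S_1]\otimes\cdots\otimes\mathbf H[S_k]$ is the iterated coproduct (well-defined by coassociativity); a set decomposition is an ordered sequence of pairwise disjoint, possibly empty sets with union $I$. For $\mathbf H$ spanned by a family of polyhedra, $\mathbb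 I(\mathbf H)[I]$ is the span of indicator functions $\mathbb 1_P$ of members $P\subseteq\mathbb R^I$ of the family. A linear map $f:\mathbf H[I]\to A$ is a strong valuation if there is a linear map $\hat f:\mathbb I(\mathbf H)[I]\to A$ with $f(P)=\hat f(\mathbb 1_P)$ for all such $P$ (equivalently, $f(\sum_j\lambda_jP_j)=0$ whenever $\sum_j\lambda_j\mathbb 1_{P_j}=0$). *)

theory Defs
  imports Main "HOL-Library.Extended_Real"
begin

type_synonym 'e poly = "('e \<Rightarrow> real) set"

text \<open>Points of R^I are functions vanishing outside I.\<close>
definition vecs :: "'e set \<Rightarrow> ('e \<Rightarrow> real) set" where
  "vecs I = {x. \<forall>i. i \<notin> I \<longrightarrow> x i = 0}"

definition restr :: "'e set \<Rightarrow> ('e \<Rightarrow> real) \<Rightarrow> ('e \<Rightarrow> real)" where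
  "restr A x = (\<lambda>i. if i \<in> A then x i else 0)"

definition submod_fin :: "'e set \<Rightarrow> ('e set \<Rightarrow> ereal) \<Rightarrow> bool" where
  "submod_fin I z \<longleftrightarrow> (\<forall>A B. A \<subseteq> I \<longrightarrow> B \<subseteq> I \<longrightarrow> z A \<noteq> \<infinity> \<longrightarrow> z B \<noteq> \<infinity> \<longrightarrow>
       z (A \<union> B) + z (A \<inter> B) \<le> z A + z B)"

definition ext_gp :: "'e set \<Rightarrow> 'e poly \<Rightarrow> bool" where
  "ext_gp I P \<longleftrightarrow> finite I \<and> (\<exists>z :: 'e set \<Rightarrow> ereal.
      (\<forall>A. A \<subseteq> I \<longrightarrow> z A \<noteq> -\<infinity>) \<and> z I \<noteq> \<infinity> \<and> submod_fin I z \<and>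
      P = {x \<in> vecs I. ereal (\<Sum>i\<in>I. x i) = z I \<and>
                       (\<forall>A. A \<subseteq> I \<longrightarrow> ereal (\<Sum>i\<in>A. x i) \<le> z A)})"

text \<open>Coproduct Delta_{S, I-S}: None encodes 0.\<close>
definition cop :: "'e set \<Rightarrow> 'e set \<Rightarrow> 'e poly \<Rightarrow> ('e poly \<times> 'e poly) option" where
  "cop I S P = (if bdd_above ((\<lambda>x. \<Sum>i\<in>S. x i) ` P) then
      (let Fc = {x \<in> P. \<forall>y \<in> P. (\<Sum>i\<in>S. y i) \<le> (\<Sum>i\<in>S. x i)}
       in Some (restr S ` Fc, restr (I - S) ` Fc))
     else None)"

text \<open>Iterated coproduct Delta_{S_1,...,S_k}, via coassociativity:
  (id (x) Delta_{S_2,...,S_k}) o Delta_{S_1, S_2 u ... u S_k}.\<close>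
fun icop :: "'e set \<Rightarrow> 'e set list \<Rightarrow> 'e poly \<Rightarrow> 'e poly list option" where
  "icop I [] P = Some []"
| "icop I [S] P = Some [P]"
| "icop I (S # S' # Ss) P = (case cop I S P of None \<Rightarrow> None
     | Some (A, B) \<Rightarrow> map_option (Cons A) (icop (I - S) (S' # Ss) B))"

text \<open>m_R o (f_1 (x) ... (x) f_k) o Delta_{S_1,...,S_k}, on basis elements.\<close>
definition comp_map :: "'e set \<Rightarrow> 'e set list \<Rightarrow> ('e poly \<Rightarrow> 'r::ring_1) list \<Rightarrow> 'e poly \<Rightarrow> 'r" where
  "comp_map I S fs P = (case icop I S P of None \<Rightarrow> 0
      | Some Ps \<Rightarrow> prod_list (map (\<lambda>(f, Q). f Q) (zip fs Ps)))"

definition basis :: "('e set \<times> 'e poly) set \<Rightarrow> 'e set \<Rightarrow> 'e poly set" where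
  "basis F I = {P. (I, P) \<in> F}"

definition k_algebra :: "('k::field \<Rightarrow> 'r::ring_1 \<Rightarrow> 'r) \<Rightarrow> bool" where
  "k_algebra sc \<longleftrightarrow> (\<forall>a x y. sc a (x + y) = sc a x + sc a y) \<and>
     (\<forall>a b x. sc (a + b) x = sc a x + sc b x) \<and>
     (\<forall>a b x. sc (a * b) x = sc a (sc b x)) \<and> (\<forall>x. sc 1 x = x) \<and>
     (\<forall>a x y. sc a (x * y) = sc a x * y \<and> sc a (x * y) = x * sc a y)"

text \<open>A linear map H[I] -> R, given by its values f on the basis, is a strong valuation iff
  f(sum c_P P) = 0 whenever sum c_P 1_P = 0.\<close>
definition strong_val :: "('k::field \<Rightarrow> 'r::ring_1 \<Rightarrow> 'r) \<Rightarrow> ('e set \<times> 'e poly) set \<Rightarrow> 'e set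
     \<Rightarrow> ('e poly \<Rightarrow> 'r) \<Rightarrow> bool" where
  "strong_val sc F I f \<longleftrightarrow> (\<forall>c :: 'e poly \<Rightarrow> 'k.
      finite {P. c P \<noteq> 0} \<longrightarrow> {P. c P \<noteq> 0} \<subseteq> basis F I \<longrightarrow>
      (\<forall>x. (\<Sum>P | c P \<noteq> 0. c P * (if x \<in> P then 1 else 0)) = 0) \<longrightarrow>
      (\<Sum>P | c P \<noteq> 0. sc (c P) (f P)) = 0)"

definition prod_poly :: "'e set \<Rightarrow> 'e set \<Rightarrow> 'e poly \<Rightarrow> 'e poly \<Rightarrow> 'e poly" where
  "prod_poly S T P Q = {x \<in> vecs (S \<union> T). restr S x \<in> P \<and> restr T x \<in> Q}"

definition relabel :: "'e set \<Rightarrow> 'e set \<Rightarrow> ('e \<Rightarrow> 'e) \<Rightarrow> 'e poly \<Rightarrow> 'e poly" where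
  "relabel I J \<sigma> P = {y \<in> vecs J. (\<lambda>i. if i \<in> I then y (\<sigma> i) else 0) \<in> P}"

text \<open>F (pairs (I,P), P in GP+[I]) spans a Hopf submonoid H of GP+.\<close>
definition hopf_sub :: "('e set \<times> 'e poly) set \<Rightarrow> bool" where
  "hopf_sub F \<longleftrightarrow> (\<forall>I P. (I, P) \<in> F \<longrightarrow> ext_gp I P) \<and>
     (\<forall>I J \<sigma> P. (I, P) \<in> F \<longrightarrow> bij_betw \<sigma> I J \<longrightarrow> (J, relabel I J \<sigma> P) \<in> F) \<and>
     (\<forall>S T P Q. (S, P) \<in> F \<longrightarrow> (T, Q) \<in> F \<longrightarrow> S \<inter> T = {} \<longrightarrow> (S \<union> T, prod_poly S T P Q) \<in> F) \<and>
     (\<forall>I S P A B. (I, P) \<in> F \<longrightarrow> S \<subseteq> I \<longrightarrow> cop I S P = Some (A, B) \<longrightarrow>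
         (S, A) \<in> F \<and> (I - S, B) \<in> F)"

definition set_decomp :: "'e set \<Rightarrow> 'e set list \<Rightarrow> bool" where
  "set_decomp I S \<longleftrightarrow> (\<forall>i < length S. \<forall>j < length S. i \<noteq> j \<longrightarrow> S ! i \<inter> S ! j = {}) \<and>
     \<Union> (set S) = I"

definition val_data :: "('k::field \<Rightarrow> 'r::ring_1 \<Rightarrow> 'r) \<Rightarrow> ('e set \<times> 'e poly) set \<Rightarrow> 'e set
     \<Rightarrow> 'e set list \<Rightarrow> ('e poly \<Rightarrow> 'r) list \<Rightarrow> bool" where
  "val_data sc F I S fs \<longleftrightarrow> set_decomp I S \<and> S \<noteq> [] \<and> length fs = length S \<and>
     (\<forall>i < length S. strong_val sc F (S ! i) (fs ! i))"

end

theory Submission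
  imports Defs "HOL-Analysis.Function_Topology"
begin


definition myconv :: "('e \<Rightarrow> real) set \<Rightarrow> bool" where
  "myconv K \<longleftrightarrow> (\<forall>x\<in>K. \<forall>y\<in>K. \<forall>u::real. 0 \<le> u \<and> u \<le> 1 \<longrightarrow> (\<lambda>i. (1-u)*x i + u*y i) \<in> K)"

definition flat :: "'e set \<Rightarrow> ('e \<Rightarrow> real) \<Rightarrow> ('e \<Rightarrow> real) set \<Rightarrow> bool" where
  "flat J b K \<longleftrightarrow> (\<forall>x\<in>K. \<forall>i. i \<notin> J \<longrightarrow> x i = b i)"

lemma closed_coord_eq: "closed {v::'e\<Rightarrow>real. v j = t}"
  by (rule closed_Collect_eq) (simp_all add: continuous_on_const)

lemma proj_interval:
  fixes K :: "('e \<Rightarrow> real) set"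
  assumes "compact K" "myconv K" "K \<noteq> {}"
  shows "\<exists>a b. a \<le> b \<and> (\<lambda>v. v j) ` K = {a..b}"
proof -
  let ?Y = "(\<lambda>v. v j) ` K"
  have cY: "compact ?Y"
    by (rule compact_continuous_image[OF _ assms(1)])
       (rule continuous_on_subset[OF continuous_on_product_coordinates], simp)
  have ne: "?Y \<noteq> {}" using assms(3) by auto
  obtain a where a: "a \<in> ?Y" "\<forall>y\<in>?Y. a \<le> y" using compact_attains_inf[OF cY ne] by metis
  obtain b where b: "b \<in> ?Y" "\<forall>y\<in>?Y. y \<le> b" using compact_attains_sup[OF cY ne] by metis
  obtain va where va: "va \<in> K" "va j = a" using a(1) by (auto simp: image_iff)
  obtain vb where vb: "vb \<in> K" "vb j = b" using b(1) by (auto simp: image_iff)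
  have "a \<le> b" using a b by auto
  moreover have "?Y = {a..b}"
  proof
    show "?Y \<subseteq> {a..b}" using a b by auto
    show "{a..b} \<subseteq> ?Y"
    proof
      fix t assume t: "t \<in> {a..b}"
      show "t \<in> ?Y"
      proof (cases "a = b")
        case True then show ?thesis using t a by auto
      next
        case False
        then have ab: "a < b" using \<open>a \<le> b\<close> by auto
        define u where "u = (t - a) / (b - a)"
        have u: "0 \<le> u" "u \<le> 1" using t ab by (auto simp: u_def field_simps)
        have "(\<lambda>i. (1-u) * va i + u * vb i) \<in> K"
          using assms(2) va vb u unfolding myconv_def by blast
        moreover have "(1-u) * va j + u * vb j = t"
        proof -
          have "(1-u) * va j + u * vb j = a + u*(b-a)" using va vb by (simp add: algebra_simps)
          also have "\<dots> = t" using ab by (simp add: u_def)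
          finally show ?thesis .
        qed
        ultimately show ?thesis by force
      qed
    qed
  qed
  ultimately show ?thesis by blast
qed

lemma sum_split_filter:
  assumes "finite M"
  shows "sum c {m\<in>M. P m} = sum c {m\<in>M. P m \<and> Q m} + sum c {m\<in>M. P m \<and> \<not> Q m}"
proof -
  have e: "{m\<in>M. P m} = {m\<in>M. P m \<and> Q m} \<union> {m\<in>M. P m \<and> \<not> Q m}" by blast
  have "sum c ({m\<in>M. P m \<and> Q m} \<union> {m\<in>M. P m \<and> \<not> Q m}) = sum c {m\<in>M. P m \<and> Q m} + sum c {m\<in>M. P m \<and> \<not> Q m}"
    by (rule sum.union_disjoint) (use assms in auto)
  then show ?thesis using e by simp
qed

lemma chi_lemma:
  assumes "finite J"
  shows "\<forall>b (M::'m set) (c::'m \<Rightarrow> 'k::field) K. finite M \<longrightarrow>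
     (\<forall>m\<in>M. K m \<noteq> {} \<and> compact (K m) \<and> myconv (K m) \<and> flat J b (K m)) \<longrightarrow>
     (\<forall>y. (\<Sum>m\<in>M. c m * (if y \<in> K m then 1 else 0)) = 0) \<longrightarrow> sum c M = 0"
  using assms
proof (induction J)
  case empty
  show ?case
  proof (intro allI impI)
    fix b and M :: "'m set" and c :: "'m \<Rightarrow> 'k" and K
    assume fM: "finite M" and H: "\<forall>m\<in>M. K m \<noteq> {} \<and> compact (K m) \<and> myconv (K m) \<and> flat {} b (K m)"
      and R: "\<forall>y. (\<Sum>m\<in>M. c m * (if y \<in> K m then 1 else 0)) = 0"
    have "\<forall>m\<in>M. b \<in> K m"
    proof
      fix m assume "m \<in> M"
      then obtain x where "x \<in> K m" "flat {} b (K m)" using H by blast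
      then have "x = b" by (intro ext) (auto simp: flat_def)
      then show "b \<in> K m" using \<open>x \<in> K m\<close> by simp
    qed
    then show "sum c M = 0" using R[rule_format, of b] by simp
  qed
next
  case (insert j J)
  show ?case
  proof (intro allI impI)
    fix b and M :: "'m set" and c :: "'m \<Rightarrow> 'k" and K
    assume fM: "finite M" and H: "\<forall>m\<in>M. K m \<noteq> {} \<and> compact (K m) \<and> myconv (K m) \<and> flat (insert j J) b (K m)"
      and R: "\<forall>y. (\<Sum>m\<in>M. c m * (if y \<in> K m then 1 else 0)) = 0"
    define Y where "Y m = (\<lambda>v. v j) ` K m" for m
    define a where "a m = Inf (Y m)" for m
    define bb where "bb m = Sup (Y m)" for m
    have Yab: "Y m = {a m..bb m} \<and> a m \<le> bb m" if "m \<in> M" for m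
    proof -
      have "compact (K m)" "myconv (K m)" "K m \<noteq> {}" using H that by auto
      from proj_interval[OF this, of j] obtain a' b' where "a' \<le> b'" "Y m = {a'..b'}"
        unfolding Y_def by blast
      then show ?thesis unfolding a_def bb_def by simp
    qed
    have slice: "(\<Sum>m\<in>{m\<in>M. a m \<le> t \<and> t \<le> bb m}. c m) = 0" for t
    proof -
      define K' where "K' m = K m \<inter> {v. v j = t}" for m
      have "\<forall>m\<in>{m\<in>M. a m \<le> t \<and> t \<le> bb m}. K' m \<noteq> {} \<and> compact (K' m) \<and> myconv (K' m) \<and> flat J (b(j:=t)) (K' m)"
      proof
        fix m assume m: "m \<in> {m\<in>M. a m \<le> t \<and> t \<le> bb m}"
        then have "t \<in> Y m" using Yab by auto
        then have ne: "K' m \<noteq> {}" unfolding Y_def K'_def by auto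
        have "compact (K m)" using H m by simp
        then have cp: "compact (K' m)" unfolding K'_def
          by (simp add: compact_Int_closed closed_coord_eq)
        have cv: "myconv (K' m)" using H m unfolding K'_def myconv_def by (auto simp: algebra_simps)
        have fl: "flat J (b(j:=t)) (K' m)" using H m unfolding K'_def flat_def by auto
        show "K' m \<noteq> {} \<and> compact (K' m) \<and> myconv (K' m) \<and> flat J (b(j:=t)) (K' m)"
          using ne cp cv fl by blast
      qed
      moreover have "\<forall>y. (\<Sum>m\<in>{m\<in>M. a m \<le> t \<and> t \<le> bb m}. c m * (if y \<in> K' m then 1 else 0)) = 0"
      proof
        fix y
        show "(\<Sum>m\<in>{m\<in>M. a m \<le> t \<and> t \<le> bb m}. c m * (if y \<in> K' m then 1 else 0)) = 0"
        proof (cases "y j = t")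
          case True
          have "(\<Sum>m\<in>{m\<in>M. a m \<le> t \<and> t \<le> bb m}. c m * (if y \<in> K' m then 1 else 0))
              = (\<Sum>m\<in>M. c m * (if y \<in> K m then 1 else 0))"
          proof (rule sum.mono_neutral_cong_left)
            show "finite M" by fact
            show "{m\<in>M. a m \<le> t \<and> t \<le> bb m} \<subseteq> M" by auto
            show "\<forall>i\<in>M - {m\<in>M. a m \<le> t \<and> t \<le> bb m}. c i * (if y \<in> K i then 1 else 0) = 0"
            proof
              fix i assume i: "i \<in> M - {m\<in>M. a m \<le> t \<and> t \<le> bb m}"
              have "y \<notin> K i"
              proof
                assume "y \<in> K i"
                then have "t \<in> Y i" using True unfolding Y_def by force
                then show False using i Yab by auto
              qed
              then show "c i * (if y \<in> K i then 1 else 0) = 0" by simp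
            qed
            show "\<And>x. x \<in> {m\<in>M. a m \<le> t \<and> t \<le> bb m} \<Longrightarrow>
              c x * (if y \<in> K' x then 1 else 0) = c x * (if y \<in> K x then 1 else 0)"
              using True unfolding K'_def by auto
          qed
          then show ?thesis using R by simp
        next
          case False
          then show ?thesis unfolding K'_def by simp
        qed
      qed
      moreover have "finite {m\<in>M. a m \<le> t \<and> t \<le> bb m}" using fM by simp
      ultimately show ?thesis
        using insert.IH[rule_format, where b="b(j:=t)" and M="{m\<in>M. a m \<le> t \<and> t \<le> bb m}" and c=c and K=K'] by blast
    qed
    have top: "(\<Sum>m\<in>{m\<in>M. bb m = t}. c m) = 0" for t
    proof -
      define E where "E = {s \<in> a ` M \<union> bb ` M. t < s}"
      have fE: "finite E" using fM unfolding E_def by auto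
      define t' where "t' = (if E = {} then t + 1 else (t + Min E) / 2)"
      have tt': "t < t'"
      proof (cases "E = {}")
        case False
        then have "Min E \<in> E" using fE by auto
        then show ?thesis using False unfolding t'_def E_def by auto
      qed (simp add: t'_def)
      have gap: "s \<le> t \<or> t' < s" if "s \<in> a ` M \<union> bb ` M" for s
      proof (cases "t < s")
        case True
        then have sE: "s \<in> E" using that unfolding E_def by auto
        then have ne: "E \<noteq> {}" by auto
        have "Min E \<le> s" using fE sE by auto
        moreover have "t < Min E" using fE ne Min_in[OF fE ne] unfolding E_def by auto
        ultimately show ?thesis using ne unfolding t'_def by auto
      qed simp
      have eq1: "{m\<in>M. a m \<le> t' \<and> t' \<le> bb m} = {m\<in>M. a m \<le> t \<and> t < bb m}"
      proof -
        have "a m \<le> t' \<longleftrightarrow> a m \<le> t" if "m \<in> M" for m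
          using gap[of "a m"] that tt' by auto
        moreover have "t' \<le> bb m \<longleftrightarrow> t < bb m" if "m \<in> M" for m
          using gap[of "bb m"] that tt' by auto
        ultimately show ?thesis by auto
      qed
      have ab': "\<forall>m\<in>M. a m \<le> bb m" using Yab by blast
      have eq2: "{m\<in>M. bb m = t} = {m\<in>M. (a m \<le> t \<and> t \<le> bb m) \<and> \<not> t < bb m}"
        using ab' by auto
      have "(\<Sum>m\<in>{m\<in>M. a m \<le> t \<and> t \<le> bb m}. c m)
          = (\<Sum>m\<in>{m\<in>M. (a m \<le> t \<and> t \<le> bb m) \<and> t < bb m}. c m)
            + (\<Sum>m\<in>{m\<in>M. (a m \<le> t \<and> t \<le> bb m) \<and> \<not> t < bb m}. c m)"
        by (rule sum_split_filter[OF fM])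
      moreover have "{m\<in>M. (a m \<le> t \<and> t \<le> bb m) \<and> t < bb m} = {m\<in>M. a m \<le> t' \<and> t' \<le> bb m}"
        using eq1 by auto
      ultimately show ?thesis using slice[of t] slice[of t'] eq2 by simp
    qed
    have "sum c M = (\<Sum>t\<in>bb ` M. \<Sum>m\<in>{m\<in>M. bb m = t}. c m)"
      using sum.image_gen[OF fM, of c bb] by simp
    also have "\<dots> = 0" using top by simp
    finally show "sum c M = 0" .
  qed
qed


definition gpset :: "'e set \<Rightarrow> ('e set \<Rightarrow> ereal) \<Rightarrow> ('e \<Rightarrow> real) set" where
  "gpset I z = {x \<in> vecs I. ereal (\<Sum>i\<in>I. x i) = z I \<and> (\<forall>A. A \<subseteq> I \<longrightarrow> ereal (\<Sum>i\<in>A. x i) \<le> z A)}"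

definition gpz :: "'e set \<Rightarrow> ('e set \<Rightarrow> ereal) \<Rightarrow> bool" where
  "gpz I z \<longleftrightarrow> (\<forall>A. A \<subseteq> I \<longrightarrow> z A \<noteq> -\<infinity>) \<and> z I \<noteq> \<infinity> \<and> submod_fin I z"

lemma ext_gpE: "ext_gp I P \<Longrightarrow> finite I \<and> (\<exists>z. gpz I z \<and> P = gpset I z)"
  unfolding ext_gp_def gpz_def gpset_def by blast

definition ray :: "('e \<Rightarrow> real) \<Rightarrow> real \<Rightarrow> ('e \<Rightarrow> real) \<Rightarrow> ('e \<Rightarrow> real)" where
  "ray x e v = (\<lambda>i. x i + e * v i)"

lemma ray_apply[simp]: "ray x e v i = x i + e * v i" by (simp add: ray_def)

lemma sum_ray2: "(\<Sum>i\<in>A. x i + (e::real) * v i) = (\<Sum>i\<in>A. x i) + e * (\<Sum>i\<in>A. v i)"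
proof -
  have "(\<Sum>i\<in>A. e * v i) = e * (\<Sum>i\<in>A. v i)" by (rule sum_distrib_left[symmetric])
  then show ?thesis by (simp add: sum.distrib)
qed

lemma sum_ray: "(\<Sum>i\<in>A. ray x e v i) = (\<Sum>i\<in>A. x i) + e * (\<Sum>i\<in>A. v i)"
  unfolding ray_def by (rule sum_ray2)

definition tcone :: "'e set \<Rightarrow> ('e set \<Rightarrow> ereal) \<Rightarrow> ('e \<Rightarrow> real) \<Rightarrow> ('e \<Rightarrow> real) set" where
  "tcone I z x = (if x \<in> gpset I z then
     {v \<in> vecs I. (\<Sum>i\<in>I. v i) = 0 \<and> (\<forall>A. A \<subseteq> I \<longrightarrow> ereal (\<Sum>i\<in>A. x i) = z A \<longrightarrow> (\<Sum>i\<in>A. v i) \<le> 0)}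
     else {})"

lemma lin_tendsto: "((\<lambda>e::real. a + e * b) \<longlongrightarrow> a) (at_right 0)"
proof -
  have "((\<lambda>e::real. a + e * b) \<longlongrightarrow> a + 0 * b) (at_right 0)"
    by (intro tendsto_intros)
  then show ?thesis by simp
qed

lemma gpz_ne_minf: "gpz I z \<Longrightarrow> A \<subseteq> I \<Longrightarrow> z A \<noteq> -\<infinity>"
  unfolding gpz_def by blast

lemma ev_tcone:
  assumes gz: "gpz I z" and fI: "finite I"
  shows "eventually (\<lambda>e. (ray x e v \<in> gpset I z) \<longleftrightarrow> (v \<in> tcone I z x)) (at_right 0)"
proof -
  have pos: "eventually (\<lambda>e::real. 0 < e) (at_right 0)" by (rule eventually_at_right_less)
  have zI: "z I \<noteq> -\<infinity>" "z I \<noteq> \<infinity>" using gz unfolding gpz_def by auto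
  show ?thesis
  proof (cases "x \<in> gpset I z")
    case xin: True
    then have xv: "x \<in> vecs I" and xI: "ereal (\<Sum>i\<in>I. x i) = z I"
      and xA: "\<And>A. A \<subseteq> I \<Longrightarrow> ereal (\<Sum>i\<in>A. x i) \<le> z A" by (auto simp: gpset_def)
    show ?thesis
    proof (cases "v \<in> tcone I z x")
      case True
      then have vv: "v \<in> vecs I" "(\<Sum>i\<in>I. v i) = 0"
        and vA: "\<And>A. A \<subseteq> I \<Longrightarrow> ereal (\<Sum>i\<in>A. x i) = z A \<Longrightarrow> (\<Sum>i\<in>A. v i) \<le> 0"
        using xin by (auto simp: tcone_def)
      have evA: "\<forall>A\<in>Pow I. eventually (\<lambda>e. ereal ((\<Sum>i\<in>A. x i) + e * (\<Sum>i\<in>A. v i)) \<le> z A) (at_right 0)"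
      proof
        fix A assume A: "A \<in> Pow I"
        show "eventually (\<lambda>e. ereal ((\<Sum>i\<in>A. x i) + e * (\<Sum>i\<in>A. v i)) \<le> z A) (at_right 0)"
        proof (cases "z A = \<infinity>")
          case True then show ?thesis by simp
        next
          case False
          moreover have "z A \<noteq> -\<infinity>" using gz A by (simp add: gpz_ne_minf)
          ultimately obtain r where r: "z A = ereal r" by (cases "z A") auto
          have le: "(\<Sum>i\<in>A. x i) \<le> r" using xA[of A] A r by simp
          show ?thesis
          proof (cases "(\<Sum>i\<in>A. x i) = r")
            case True
            then have "(\<Sum>i\<in>A. v i) \<le> 0" using vA[of A] A r by simp
            then show ?thesis using pos
              by (rule_tac eventually_mono[OF pos]) (simp add: r True mult_nonneg_nonpos)
          next
            case False
            then have "(\<Sum>i\<in>A. x i) < r" using le by simp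
            from order_tendstoD(2)[OF lin_tendsto[of "\<Sum>i\<in>A. x i" "\<Sum>i\<in>A. v i"] this]
            show ?thesis by (rule eventually_mono) (simp add: r)
          qed
        qed
      qed
      have "eventually (\<lambda>e. \<forall>A\<in>Pow I. ereal ((\<Sum>i\<in>A. x i) + e * (\<Sum>i\<in>A. v i)) \<le> z A) (at_right 0)"
        using eventually_ball_finite[OF _ evA] fI by simp
      then have "eventually (\<lambda>e. ray x e v \<in> gpset I z) (at_right 0)"
      proof (rule eventually_mono)
        fix e assume H: "\<forall>A\<in>Pow I. ereal ((\<Sum>i\<in>A. x i) + e * (\<Sum>i\<in>A. v i)) \<le> z A"
        have "ray x e v \<in> vecs I" using xv vv(1) by (simp add: vecs_def)
        moreover have "ereal (\<Sum>i\<in>I. ray x e v i) = z I" using xI vv(2) by (simp add: sum_ray sum_ray2)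
        moreover have "\<forall>A. A \<subseteq> I \<longrightarrow> ereal (\<Sum>i\<in>A. ray x e v i) \<le> z A" using H by (simp add: sum_ray sum_ray2)
        ultimately show "ray x e v \<in> gpset I z" by (simp add: gpset_def)
      qed
      then show ?thesis using True by simp
    next
      case False
      then have F: "v \<notin> vecs I \<or> (\<Sum>i\<in>I. v i) \<noteq> 0 \<or>
          (\<exists>A. A \<subseteq> I \<and> ereal (\<Sum>i\<in>A. x i) = z A \<and> (\<Sum>i\<in>A. v i) > 0)"
        using xin by (auto simp: tcone_def)
      have "eventually (\<lambda>e. ray x e v \<notin> gpset I z) (at_right 0)"
      proof (rule eventually_mono[OF pos])
        fix e :: real assume e: "0 < e"
        show "ray x e v \<notin> gpset I z"
        proof
          assume rin: "ray x e v \<in> gpset I z"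
          then have rv: "ray x e v \<in> vecs I" and rI: "ereal (\<Sum>i\<in>I. ray x e v i) = z I"
            and rA: "\<And>A. A \<subseteq> I \<Longrightarrow> ereal (\<Sum>i\<in>A. ray x e v i) \<le> z A" by (auto simp: gpset_def)
          from F show False
          proof (elim disjE exE conjE)
            assume "v \<notin> vecs I"
            then obtain i where "i \<notin> I" "v i \<noteq> 0" by (auto simp: vecs_def)
            then show False using rv xv e by (auto simp: vecs_def)
          next
            assume "(\<Sum>i\<in>I. v i) \<noteq> 0"
            moreover have "ereal (\<Sum>i\<in>I. x i + e * v i) = ereal (\<Sum>i\<in>I. x i)" using rI xI by simp
            ultimately show False using e by (simp add: sum_ray2)
          next
            fix A assume "A \<subseteq> I" "ereal (\<Sum>i\<in>A. x i) = z A" "(\<Sum>i\<in>A. v i) > 0"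
            moreover have "0 < e * (\<Sum>i\<in>A. v i)" using e \<open>(\<Sum>i\<in>A. v i) > 0\<close> by simp
            moreover have "z A = ereal (\<Sum>i\<in>A. x i)" using \<open>ereal (\<Sum>i\<in>A. x i) = z A\<close> by simp
            ultimately show False using rA[of A] \<open>A \<subseteq> I\<close> by (simp add: sum_ray2)
          qed
        qed
      qed
      then show ?thesis using False by simp
    qed
  next
    case xout: False
    then have tc: "tcone I z x = {}" by (simp add: tcone_def)
    have F: "x \<notin> vecs I \<or> ereal (\<Sum>i\<in>I. x i) \<noteq> z I \<or> (\<exists>A. A \<subseteq> I \<and> \<not> ereal (\<Sum>i\<in>A. x i) \<le> z A)"
      using xout by (auto simp: gpset_def)
    have "eventually (\<lambda>e. ray x e v \<notin> gpset I z) (at_right 0)"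
      using F
    proof (elim disjE exE conjE)
      assume "x \<notin> vecs I"
      then obtain i where i: "i \<notin> I" "x i \<noteq> 0" by (auto simp: vecs_def)
      have "eventually (\<lambda>e. x i + e * v i \<noteq> 0) (at_right 0)"
        by (rule tendsto_imp_eventually_ne[OF lin_tendsto i(2)])
      then show ?thesis by (rule eventually_mono) (use i in \<open>auto simp: gpset_def vecs_def\<close>)
    next
      assume ne: "ereal (\<Sum>i\<in>I. x i) \<noteq> z I"
      obtain r where r: "z I = ereal r" using zI by (cases "z I") auto
      have "(\<Sum>i\<in>I. x i) \<noteq> r" using ne r by simp
      then have "eventually (\<lambda>e. (\<Sum>i\<in>I. x i) + e * (\<Sum>i\<in>I. v i) \<noteq> r) (at_right 0)"
        by (rule tendsto_imp_eventually_ne[OF lin_tendsto])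
      then show ?thesis by (rule eventually_mono) (auto simp: gpset_def sum_ray sum_ray2 r)
    next
      fix A assume A: "A \<subseteq> I" and nle: "\<not> ereal (\<Sum>i\<in>A. x i) \<le> z A"
      have "z A \<noteq> -\<infinity>" using gz A by (simp add: gpz_ne_minf)
      moreover have "z A \<noteq> \<infinity>" using nle by auto
      ultimately obtain r where r: "z A = ereal r" by (cases "z A") auto
      have "r < (\<Sum>i\<in>A. x i)" using nle r by simp
      from order_tendstoD(1)[OF lin_tendsto this]
      have "eventually (\<lambda>e. r < (\<Sum>i\<in>A. x i) + e * (\<Sum>i\<in>A. v i)) (at_right 0)" .
      then show ?thesis
      proof (rule eventually_mono)
        fix e assume "r < (\<Sum>i\<in>A. x i) + e * (\<Sum>i\<in>A. v i)"
        then have "\<not> ereal (\<Sum>i\<in>A. ray x e v i) \<le> z A" by (simp add: sum_ray sum_ray2 r)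
        then show "ray x e v \<notin> gpset I z" using A by (auto simp: gpset_def)
      qed
    qed
    then show ?thesis using tc by simp
  qed
qed


lemma ev_ex: "eventually P (at_right (0::real)) \<Longrightarrow> \<exists>e>0. P e"
proof -
  assume "eventually P (at_right (0::real))"
  then obtain b where b: "b > 0" "\<forall>y>0. y < b \<longrightarrow> P y" unfolding eventually_at_right_field by auto
  then show ?thesis by (intro exI[of _ "b/2"]) auto
qed

lemma sum_conv: "(\<Sum>i\<in>A. (1-u) * x i + u * y i) = (1-u) * (\<Sum>i\<in>A. x i) + u * (\<Sum>i\<in>A. (y i::real))"
  by (simp add: sum.distrib sum_distrib_left)

lemma gpset_conv:
  assumes "x \<in> gpset I z" "y \<in> gpset I z" "0 \<le> u" "u \<le> 1"
  shows "(\<lambda>i. (1-u) * x i + u * y i) \<in> gpset I z"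
proof -
  have x: "x \<in> vecs I" "ereal (\<Sum>i\<in>I. x i) = z I" "\<And>A. A \<subseteq> I \<Longrightarrow> ereal (\<Sum>i\<in>A. x i) \<le> z A"
    using assms(1) by (auto simp: gpset_def)
  have y: "y \<in> vecs I" "ereal (\<Sum>i\<in>I. y i) = z I" "\<And>A. A \<subseteq> I \<Longrightarrow> ereal (\<Sum>i\<in>A. y i) \<le> z A"
    using assms(2) by (auto simp: gpset_def)
  have "(\<lambda>i. (1-u) * x i + u * y i) \<in> vecs I" using x(1) y(1) by (simp add: vecs_def)
  moreover have "ereal (\<Sum>i\<in>I. (1-u) * x i + u * y i) = z I"
  proof -
    have "(\<Sum>i\<in>I. x i) = (\<Sum>i\<in>I. y i)" using x(2) y(2) by (metis ereal.inject)
    then show ?thesis using x(2) unfolding sum_conv by (simp add: algebra_simps)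
  qed
  moreover have "ereal (\<Sum>i\<in>A. (1-u) * x i + u * y i) \<le> z A" if A: "A \<subseteq> I" for A
  proof (cases "z A")
    case (real r)
    have "(\<Sum>i\<in>A. x i) \<le> r" "(\<Sum>i\<in>A. y i) \<le> r" using x(3)[OF A] y(3)[OF A] real by auto
    then have "(1-u) * (\<Sum>i\<in>A. x i) + u * (\<Sum>i\<in>A. y i) \<le> (1-u) * r + u * r"
      using assms(3,4) by (intro add_mono mult_left_mono) auto
    then show ?thesis using real unfolding sum_conv by (simp add: algebra_simps)
  next
    case PInf then show ?thesis by simp
  next
    case MInf then show ?thesis using x(3)[OF A] by simp
  qed
  ultimately show ?thesis by (simp add: gpset_def)
qed

definition face :: "'e set \<Rightarrow> ('e \<Rightarrow> real) set \<Rightarrow> ('e \<Rightarrow> real) set" where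
  "face S P = {x\<in>P. \<forall>y\<in>P. (\<Sum>i\<in>S. y i) \<le> (\<Sum>i\<in>S. x i)}"

lemma face_iff:
  assumes gz: "gpz I z" and fI: "finite I" and xP: "x \<in> gpset I z"
  shows "(bdd_above ((\<lambda>y. \<Sum>i\<in>S. y i) ` gpset I z) \<and> x \<in> face S (gpset I z))
     \<longleftrightarrow> \<not> (\<exists>v\<in>tcone I z x. 1 \<le> (\<Sum>i\<in>S. v i))"
proof
  assume H: "bdd_above ((\<lambda>y. \<Sum>i\<in>S. y i) ` gpset I z) \<and> x \<in> face S (gpset I z)"
  show "\<not> (\<exists>v\<in>tcone I z x. 1 \<le> (\<Sum>i\<in>S. v i))"
  proof
    assume "\<exists>v\<in>tcone I z x. 1 \<le> (\<Sum>i\<in>S. v i)"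
    then obtain v where v: "v \<in> tcone I z x" "1 \<le> (\<Sum>i\<in>S. v i)" by blast
    have "eventually (\<lambda>e. (ray x e v \<in> gpset I z) \<longleftrightarrow> (v \<in> tcone I z x)) (at_right 0)"
      by (rule ev_tcone[OF gz fI])
    then have "eventually (\<lambda>e. ray x e v \<in> gpset I z) (at_right 0)" using v(1) by simp
    then obtain e where e: "e > 0" "ray x e v \<in> gpset I z" using ev_ex by blast
    have "\<forall>y\<in>gpset I z. (\<Sum>i\<in>S. y i) \<le> (\<Sum>i\<in>S. x i)" using H by (simp add: face_def)
    then have "(\<Sum>i\<in>S. ray x e v i) \<le> (\<Sum>i\<in>S. x i)" using e(2) by blast
    moreover have "0 < e * (\<Sum>i\<in>S. v i)" using e v by simp
    ultimately show False by (simp add: sum_ray2)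
  qed
next
  assume H: "\<not> (\<exists>v\<in>tcone I z x. 1 \<le> (\<Sum>i\<in>S. v i))"
  show "bdd_above ((\<lambda>y. \<Sum>i\<in>S. y i) ` gpset I z) \<and> x \<in> face S (gpset I z)"
  proof (rule ccontr)
    assume nb: "\<not> (bdd_above ((\<lambda>y. \<Sum>i\<in>S. y i) ` gpset I z) \<and> x \<in> face S (gpset I z))"
    have "\<exists>y\<in>gpset I z. (\<Sum>i\<in>S. x i) < (\<Sum>i\<in>S. y i)"
    proof (cases "bdd_above ((\<lambda>y. \<Sum>i\<in>S. y i) ` gpset I z)")
      case True
      then have "x \<notin> face S (gpset I z)" using nb by blast
      then show ?thesis using xP unfolding face_def by (auto simp: not_le)
    next
      case False
      then have "\<not> (\<forall>t\<in>(\<lambda>y. \<Sum>i\<in>S. y i) ` gpset I z. t \<le> (\<Sum>i\<in>S. x i))"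
        unfolding bdd_above_def by blast
      then show ?thesis by (auto simp: not_le)
    qed
    then obtain y where y: "y \<in> gpset I z" "(\<Sum>i\<in>S. x i) < (\<Sum>i\<in>S. y i)" by blast
    define d where "d = (\<Sum>i\<in>S. y i) - (\<Sum>i\<in>S. x i)"
    have d: "d > 0" using y(2) by (simp add: d_def)
    define v where "v = (\<lambda>i. (y i - x i) / d)"
    have sv: "(\<Sum>i\<in>S. v i) = 1"
      using d by (simp add: v_def d_def sum_divide_distrib[symmetric] sum_subtractf)
    have ev1: "eventually (\<lambda>e. (ray x e v \<in> gpset I z) \<longleftrightarrow> (v \<in> tcone I z x)) (at_right 0)"
      by (rule ev_tcone[OF gz fI])
    have ev2: "eventually (\<lambda>e. 0 < e \<and> e < d) (at_right 0)"
      using eventually_at_right_real[OF d] by (rule eventually_mono) simp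
    obtain e where e: "(ray x e v \<in> gpset I z) \<longleftrightarrow> (v \<in> tcone I z x)" "0 < e" "e < d"
      using ev_ex[OF eventually_conj[OF ev1 ev2]] by blast
    have dn: "d \<noteq> 0" using d by simp
    have "ray x e v = (\<lambda>i. (1 - e/d) * x i + (e/d) * y i)"
    proof (rule ext)
      fix i
      have "x i + e * ((y i - x i) / d) = (1 - e/d) * x i + (e/d) * y i"
        using dn by (simp add: field_simps)
      then show "ray x e v i = (1 - e/d) * x i + (e/d) * y i" by (simp add: v_def)
    qed
    moreover have "(\<lambda>i. (1 - e/d) * x i + (e/d) * y i) \<in> gpset I z"
      using e d by (intro gpset_conv[OF xP y(1)]) simp_all
    ultimately have "v \<in> tcone I z x" using e(1) by simp
    then show False using H sv by auto
  qed
qed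

lemma tcone_vecs: "tcone I z x \<subseteq> vecs I"
  by (auto simp: tcone_def)

lemma tcone_conv: "myconv (tcone I z x)"
proof (cases "x \<in> gpset I z")
  case True
  show ?thesis unfolding myconv_def
  proof (intro ballI allI impI)
    fix v w u assume v: "v \<in> tcone I z x" and w: "w \<in> tcone I z x" and u: "0 \<le> u \<and> u \<le> (1::real)"
    have vv: "v \<in> vecs I" "(\<Sum>i\<in>I. v i) = 0" "\<And>A. A \<subseteq> I \<Longrightarrow> ereal (\<Sum>i\<in>A. x i) = z A \<Longrightarrow> (\<Sum>i\<in>A. v i) \<le> 0"
      using v True by (auto simp: tcone_def)
    have ww: "w \<in> vecs I" "(\<Sum>i\<in>I. w i) = 0" "\<And>A. A \<subseteq> I \<Longrightarrow> ereal (\<Sum>i\<in>A. x i) = z A \<Longrightarrow> (\<Sum>i\<in>A. w i) \<le> 0"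
      using w True by (auto simp: tcone_def)
    have "(\<lambda>i. (1-u) * v i + u * w i) \<in> vecs I" using vv(1) ww(1) by (simp add: vecs_def)
    moreover have "(\<Sum>i\<in>I. (1-u) * v i + u * w i) = 0" using vv(2) ww(2) by (simp add: sum_conv)
    moreover have "(\<Sum>i\<in>A. (1-u) * v i + u * w i) \<le> 0" if "A \<subseteq> I" "ereal (\<Sum>i\<in>A. x i) = z A" for A
    proof -
      have "(1-u) * (\<Sum>i\<in>A. v i) \<le> 0" using vv(3)[OF that] u by (simp add: mult_nonneg_nonpos)
      moreover have "u * (\<Sum>i\<in>A. w i) \<le> 0" using ww(3)[OF that] u by (simp add: mult_nonneg_nonpos)
      ultimately show ?thesis by (simp add: sum_conv)
    qed
    ultimately show "(\<lambda>i. (1-u) * v i + u * w i) \<in> tcone I z x" using True by (simp add: tcone_def)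
  qed
qed (simp add: tcone_def myconv_def)

lemma cont_sum: "continuous_on UNIV (\<lambda>v::'e\<Rightarrow>real. \<Sum>i\<in>A. v i)"
  by (intro continuous_on_sum) simp

lemma tcone_closed: fixes I :: "'e set" shows "closed (tcone I z x)"
proof (cases "x \<in> gpset I z")
  case True
  have eq: "tcone I z x = (\<Inter>i\<in>-I. {v. v i = 0}) \<inter> {v. (\<Sum>i\<in>I. v i) = 0} \<inter>
      (\<Inter>A\<in>{A. A \<subseteq> I \<and> ereal (\<Sum>i\<in>A. x i) = z A}. {v. (\<Sum>i\<in>A. v i) \<le> 0})"
    using True by (auto simp: tcone_def vecs_def)
  have c1: "closed ((\<Inter>i\<in>-I. {v::'e\<Rightarrow>real. v i = 0}))"
    by (intro closed_INT ballI closed_coord_eq)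
  have c2: "closed {v::'e\<Rightarrow>real. (\<Sum>i\<in>I. v i) = 0}"
    by (rule closed_Collect_eq[OF cont_sum]) (simp add: continuous_on_const)
  have c3: "closed (\<Inter>A\<in>{A. A \<subseteq> I \<and> ereal (\<Sum>i\<in>A. x i) = z A}. {v::'e\<Rightarrow>real. (\<Sum>i\<in>A. v i) \<le> 0})"
    by (intro closed_INT ballI closed_Collect_le[OF cont_sum]) (simp add: continuous_on_const)
  show ?thesis unfolding eq by (intro closed_Int c1 c2 c3)
qed (simp add: tcone_def)

definition boxR :: "'e set \<Rightarrow> real \<Rightarrow> ('e \<Rightarrow> real) set" where
  "boxR I R = PiE UNIV (\<lambda>i. if i \<in> I then {-R..R} else {0})"

lemma boxR_compact: "compact (boxR I R)"
proof -
  have "compactin (product_topology (\<lambda>i. euclidean) UNIV) (boxR I R)"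
    unfolding boxR_def compactin_PiE by (auto simp: compactin_euclidean_iff)
  then show ?thesis by (simp add: euclidean_product_topology compactin_euclidean_iff)
qed

lemma boxR_mem: "v \<in> boxR I R \<longleftrightarrow> (\<forall>i\<in>I. \<bar>v i\<bar> \<le> R) \<and> (\<forall>i. i \<notin> I \<longrightarrow> v i = 0)"
  unfolding boxR_def PiE_def Pi_def by (auto simp: abs_le_iff)

lemma boxR_conv: fixes I :: "'e set" shows "myconv (boxR I R)"
  unfolding myconv_def
proof (intro ballI allI impI)
  fix x y :: "'e \<Rightarrow> real" and u :: real
  assume x: "x \<in> boxR I R" and y: "y \<in> boxR I R" and u: "0 \<le> u \<and> u \<le> 1"
  have "\<bar>(1 - u) * x i + u * y i\<bar> \<le> R" if i: "i \<in> I" for i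
  proof -
  have "\<bar>(1 - u) * x i + u * y i\<bar> \<le> \<bar>(1 - u) * x i\<bar> + \<bar>u * y i\<bar>"
    by (rule abs_triangle_ineq)
  also have "\<dots> = (1-u) * \<bar>x i\<bar> + u * \<bar>y i\<bar>" using u by (simp add: abs_mult)
  also have "\<dots> \<le> (1-u) * R + u * R"
    using x y i u by (intro add_mono mult_left_mono) (auto simp: boxR_mem)
  finally show "\<bar>(1 - u) * x i + u * y i\<bar> \<le> R" by (simp add: algebra_simps)
  qed
  then show "(\<lambda>i. (1 - u) * x i + u * y i) \<in> boxR I R" using x y by (auto simp: boxR_mem)
qed


lemma myconv_Int: "myconv A \<Longrightarrow> myconv B \<Longrightarrow> myconv (A \<inter> B)"
  unfolding myconv_def by blast

lemma myconv_H: "myconv {v::'e\<Rightarrow>real. 1 \<le> (\<Sum>i\<in>S. v i)}"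
  unfolding myconv_def
proof (intro ballI allI impI)
  fix v w :: "'e\<Rightarrow>real" and u :: real
  assume v: "v \<in> {v. 1 \<le> (\<Sum>i\<in>S. v i)}" and w: "w \<in> {v. 1 \<le> (\<Sum>i\<in>S. v i)}" and u: "0 \<le> u \<and> u \<le> 1"
  have "(1-u) * 1 + u * 1 \<le> (1-u) * (\<Sum>i\<in>S. v i) + u * (\<Sum>i\<in>S. w i)"
    using v w u by (intro add_mono mult_left_mono) auto
  then show "(\<lambda>i. (1 - u) * v i + u * w i) \<in> {v. 1 \<le> (\<Sum>i\<in>S. v i)}"
    unfolding mem_Collect_eq sum_conv by simp
qed

lemma closed_H: "closed {v::'e\<Rightarrow>real. 1 \<le> (\<Sum>i\<in>S. v i)}"
  by (rule closed_Collect_le[OF continuous_on_const cont_sum])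

lemma faceval:
  fixes c :: "('e \<Rightarrow> real) set \<Rightarrow> 'k::field"
  assumes hs: "\<forall>P\<in>M. ext_gp I P" and fI: "finite I" and fM: "finite M"
    and R: "\<forall>y. (\<Sum>P\<in>M. c P * (if y \<in> P then 1 else 0)) = 0"
  shows "(\<Sum>P\<in>M. c P * (if bdd_above ((\<lambda>y. \<Sum>i\<in>S. y i) ` P) \<and> x \<in> face S P then 1 else 0)) = 0"
proof -
  define zof where "zof P = (SOME z. gpz I z \<and> P = gpset I z)" for P
  have zP: "gpz I (zof P) \<and> P = gpset I (zof P)" if "P \<in> M" for P
  proof -
    have "\<exists>z. gpz I z \<and> P = gpset I z" using ext_gpE hs that by blast
    then show ?thesis unfolding zof_def by (rule someI_ex)
  qed
  define T where "T P = tcone I (zof P) x" for P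
  have RT: "(\<Sum>P\<in>M. c P * (if v \<in> T P then 1 else 0)) = 0" for v
  proof -
    have "\<forall>P\<in>M. eventually (\<lambda>e. (ray x e v \<in> P) \<longleftrightarrow> v \<in> T P) (at_right 0)"
    proof
      fix P assume P: "P \<in> M"
      have "eventually (\<lambda>e. (ray x e v \<in> gpset I (zof P)) \<longleftrightarrow> v \<in> tcone I (zof P) x) (at_right 0)"
        using ev_tcone zP[OF P] fI by blast
      then show "eventually (\<lambda>e. (ray x e v \<in> P) \<longleftrightarrow> v \<in> T P) (at_right 0)"
        using zP[OF P] unfolding T_def by simp
    qed
    then have "eventually (\<lambda>e. \<forall>P\<in>M. (ray x e v \<in> P) \<longleftrightarrow> v \<in> T P) (at_right 0)"
      by (rule eventually_ball_finite[OF fM])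
    then obtain e where e: "\<forall>P\<in>M. (ray x e v \<in> P) \<longleftrightarrow> v \<in> T P" using ev_ex by blast
    have "(\<Sum>P\<in>M. c P * (if v \<in> T P then 1 else 0)) = (\<Sum>P\<in>M. c P * (if ray x e v \<in> P then 1 else 0))"
      by (rule sum.cong) (use e in auto)
    also have "\<dots> = 0" using R by blast
    finally show ?thesis .
  qed
  have Rx: "(\<Sum>P\<in>M. c P * (if x \<in> P then 1 else 0)) = 0" using R by blast
  define W where "W P = (\<exists>v\<in>T P. 1 \<le> (\<Sum>i\<in>S. v i))" for P
  define wv where "wv P = (SOME v. v \<in> T P \<and> 1 \<le> (\<Sum>i\<in>S. v i))" for P
  have wvP: "wv P \<in> T P \<and> 1 \<le> (\<Sum>i\<in>S. wv P i)" if "W P" for P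
    using that unfolding W_def wv_def by (metis (mono_tags, lifting) someI_ex)
  define R0 where "R0 = (\<Sum>P\<in>{P\<in>M. W P}. \<Sum>i\<in>I. \<bar>wv P i\<bar>)"
  define H where "H = {v::'e\<Rightarrow>real. 1 \<le> (\<Sum>i\<in>S. v i)}"
  define K where "K P = T P \<inter> H \<inter> boxR I R0" for P
  have KW: "K P \<noteq> {} \<longleftrightarrow> W P" if P: "P \<in> M" for P
  proof
    assume "K P \<noteq> {}"
    then show "W P" unfolding K_def W_def H_def by auto
  next
    assume w: "W P"
    then have wT: "wv P \<in> T P" and wH: "wv P \<in> H" using wvP unfolding H_def by auto
    have "wv P \<in> vecs I" using wT tcone_vecs unfolding T_def by blast
    then have out: "\<forall>i. i \<notin> I \<longrightarrow> wv P i = 0" by (simp add: vecs_def)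
    have "\<bar>wv P i\<bar> \<le> R0" if i: "i \<in> I" for i
    proof -
      have "\<bar>wv P i\<bar> \<le> (\<Sum>i\<in>I. \<bar>wv P i\<bar>)"
        by (rule member_le_sum) (use i fI in auto)
      also have "\<dots> \<le> R0" unfolding R0_def
        by (rule member_le_sum[where f="\<lambda>P. \<Sum>i\<in>I. \<bar>wv P i\<bar>"]) (use w P fM in \<open>auto intro: sum_nonneg\<close>)
      finally show ?thesis .
    qed
    then have "wv P \<in> boxR I R0" using out by (simp add: boxR_mem)
    then show "K P \<noteq> {}" using wT wH unfolding K_def by blast
  qed
  have RK: "(\<Sum>P\<in>M. c P * (if v \<in> K P then 1 else 0)) = 0" for v
  proof (cases "v \<in> H \<inter> boxR I R0")
    case True
    then have "(\<Sum>P\<in>M. c P * (if v \<in> K P then 1 else 0)) = (\<Sum>P\<in>M. c P * (if v \<in> T P then 1 else 0))"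
      unfolding K_def by (intro sum.cong) auto
    then show ?thesis using RT by simp
  next
    case False
    then show ?thesis unfolding K_def by auto
  qed
  have chi: "sum c {P\<in>M. K P \<noteq> {}} = 0"
  proof -
    have A1: "\<forall>P\<in>{P\<in>M. K P \<noteq> {}}. K P \<noteq> {} \<and> compact (K P) \<and> myconv (K P) \<and> flat I (\<lambda>_. 0) (K P)"
    proof
      fix P assume P: "P \<in> {P\<in>M. K P \<noteq> {}}"
      have cl: "closed (T P \<inter> H)" unfolding T_def H_def
        by (intro closed_Int tcone_closed closed_H)
      have "compact (boxR I R0 \<inter> (T P \<inter> H))"
        by (rule compact_Int_closed[OF boxR_compact cl])
      then have cp: "compact (K P)" unfolding K_def by (simp add: Int_ac)
      have cv: "myconv (K P)" unfolding K_def H_def T_def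
        by (intro myconv_Int tcone_conv myconv_H boxR_conv)
      have fl: "flat I (\<lambda>_. 0) (K P)" unfolding K_def flat_def by (auto simp: boxR_mem)
      show "K P \<noteq> {} \<and> compact (K P) \<and> myconv (K P) \<and> flat I (\<lambda>_. 0) (K P)"
        using P cp cv fl by blast
    qed
    have A2: "\<forall>y. (\<Sum>P\<in>{P\<in>M. K P \<noteq> {}}. c P * (if y \<in> K P then 1 else 0)) = 0"
    proof
      fix y
      have "(\<Sum>P\<in>{P\<in>M. K P \<noteq> {}}. c P * (if y \<in> K P then 1 else 0)) = (\<Sum>P\<in>M. c P * (if y \<in> K P then 1 else 0))"
        by (rule sum.mono_neutral_left) (use fM in auto)
      then show "(\<Sum>P\<in>{P\<in>M. K P \<noteq> {}}. c P * (if y \<in> K P then 1 else 0)) = 0" using RK by simp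
    qed
    have fin: "finite {P\<in>M. K P \<noteq> {}}" using fM by simp
    show ?thesis
      using chi_lemma[OF fI, rule_format, where b="\<lambda>_. 0" and M="{P\<in>M. K P \<noteq> {}}" and c=c and K=K]
        fin A1 A2 by blast
  qed
  have pt: "(if bdd_above ((\<lambda>y. \<Sum>i\<in>S. y i) ` P) \<and> x \<in> face S P then 1 else 0)
      = (if x \<in> P then 1 else 0) - (if K P \<noteq> {} then 1 else (0::'k))" if P: "P \<in> M" for P
  proof (cases "x \<in> P")
    case True
    have "(bdd_above ((\<lambda>y. \<Sum>i\<in>S. y i) ` gpset I (zof P)) \<and> x \<in> face S (gpset I (zof P)))
      \<longleftrightarrow> \<not> (\<exists>v\<in>tcone I (zof P) x. 1 \<le> (\<Sum>i\<in>S. v i))"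
      using face_iff zP[OF P] fI True by metis
    then have "(bdd_above ((\<lambda>y. \<Sum>i\<in>S. y i) ` P) \<and> x \<in> face S P) \<longleftrightarrow> \<not> W P"
      using zP[OF P] unfolding W_def T_def by simp
    then show ?thesis using KW[OF P] True by simp
  next
    case False
    then have "T P = {}" using zP[OF P] unfolding T_def tcone_def by simp
    then have "K P = {}" unfolding K_def by simp
    moreover have "x \<notin> face S P" using False unfolding face_def by simp
    ultimately show ?thesis using False by simp
  qed
  have "(\<Sum>P\<in>M. c P * (if bdd_above ((\<lambda>y. \<Sum>i\<in>S. y i) ` P) \<and> x \<in> face S P then 1 else 0))
     = (\<Sum>P\<in>M. c P * (if x \<in> P then 1 else 0)) - (\<Sum>P\<in>M. c P * (if K P \<noteq> {} then 1 else 0))"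
    by (simp add: pt right_diff_distrib sum_subtractf)
  also have "(\<Sum>P\<in>M. c P * (if K P \<noteq> {} then 1 else 0)) = sum c {P\<in>M. K P \<noteq> {}}"
    using fM by (simp add: sum.inter_filter if_distrib[of "\<lambda>t. c _ * t"] cong: if_cong)
  finally show ?thesis using Rx chi by simp
qed


definition tight :: "'e set \<Rightarrow> ('e set \<Rightarrow> ereal) \<Rightarrow> ('e \<Rightarrow> real) \<Rightarrow> 'e set \<Rightarrow> bool" where
  "tight I z y A \<longleftrightarrow> A \<subseteq> I \<and> ereal (\<Sum>i\<in>A. y i) = z A"

lemma sum_union_inter:
  assumes "finite A" "finite B"
  shows "(\<Sum>i\<in>A \<union> B. y i) + (\<Sum>i\<in>A \<inter> B. y i) = (\<Sum>i\<in>A. y i) + ((\<Sum>i\<in>B. y i)::real)"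
  by (rule sum.union_inter[OF assms])

lemma tight_un_int:
  assumes gz: "gpz I z" and fI: "finite I" and yP: "y \<in> gpset I z"
    and tA: "tight I z y A" and tB: "tight I z y B"
  shows "tight I z y (A \<union> B) \<and> tight I z y (A \<inter> B)"
proof -
  have AI: "A \<subseteq> I" and BI: "B \<subseteq> I" using tA tB by (auto simp: tight_def)
  have fA: "finite A" "finite B" using AI BI fI finite_subset by auto
  have yA: "\<And>C. C \<subseteq> I \<Longrightarrow> ereal (\<Sum>i\<in>C. y i) \<le> z C" using yP by (auto simp: gpset_def)
  have zA: "z A = ereal (\<Sum>i\<in>A. y i)" and zB: "z B = ereal (\<Sum>i\<in>B. y i)" using tA tB by (auto simp: tight_def)
  have sm: "submod_fin I z" using gz by (simp add: gpz_def)
  have "z A \<noteq> \<infinity> \<longrightarrow> z B \<noteq> \<infinity> \<longrightarrow> z (A \<union> B) + z (A \<inter> B) \<le> z A + z B"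
    using sm AI BI unfolding submod_fin_def by blast
  then have sub: "z (A \<union> B) + z (A \<inter> B) \<le> z A + z B" using zA zB by simp
  have sub2: "z (A \<union> B) + z (A \<inter> B) \<le> ereal ((\<Sum>i\<in>A. y i) + (\<Sum>i\<in>B. y i))"
    using sub zA zB by simp
  have u1: "ereal (\<Sum>i\<in>A \<union> B. y i) \<le> z (A \<union> B)" using yA AI BI by auto
  have i1: "ereal (\<Sum>i\<in>A \<inter> B. y i) \<le> z (A \<inter> B)" using AI by (intro yA) auto
  have "A \<inter> B \<subseteq> I" "A \<union> B \<subseteq> I" using AI BI by auto
  then have ni: "z (A \<inter> B) \<noteq> -\<infinity>" "z (A \<union> B) \<noteq> -\<infinity>" using gz by (auto simp: gpz_ne_minf)
  have "z (A \<union> B) \<noteq> \<infinity>"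
  proof
    assume "z (A \<union> B) = \<infinity>"
    then have "z (A \<union> B) + z (A \<inter> B) = \<infinity>" using ni by simp
    then have "\<infinity> \<le> ereal ((\<Sum>i\<in>A. y i) + (\<Sum>i\<in>B. y i))" using sub2 by metis
    then show False by simp
  qed
  then obtain a where a: "z (A \<union> B) = ereal a" using ni by (cases "z (A \<union> B)") auto
  have "z (A \<inter> B) \<noteq> \<infinity>"
  proof
    assume "z (A \<inter> B) = \<infinity>"
    then have "z (A \<union> B) + z (A \<inter> B) = \<infinity>" using a by simp
    then have "\<infinity> \<le> ereal ((\<Sum>i\<in>A. y i) + (\<Sum>i\<in>B. y i))" using sub2 by metis
    then show False by simp
  qed
  then obtain b where b: "z (A \<inter> B) = ereal b" using ni by (cases "z (A \<inter> B)") auto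
  have "a + b \<le> (\<Sum>i\<in>A. y i) + (\<Sum>i\<in>B. y i)" using sub2 a b by simp
  moreover have "(\<Sum>i\<in>A \<union> B. y i) \<le> a" "(\<Sum>i\<in>A \<inter> B. y i) \<le> b" using u1 i1 a b by auto
  moreover have "(\<Sum>i\<in>A \<union> B. y i) + (\<Sum>i\<in>A \<inter> B. y i) = (\<Sum>i\<in>A. y i) + (\<Sum>i\<in>B. y i)"
    by (rule sum_union_inter[OF fA])
  ultimately have "(\<Sum>i\<in>A \<union> B. y i) = a" "(\<Sum>i\<in>A \<inter> B. y i) = b" by linarith+
  then show ?thesis using a b AI BI by (auto simp: tight_def)
qed

lemma tight_Union:
  assumes gz: "gpz I z" and fI: "finite I" and yP: "y \<in> gpset I z"
  shows "finite F \<Longrightarrow> F \<noteq> {} \<Longrightarrow> (\<forall>A\<in>F. tight I z y A) \<Longrightarrow> tight I z y (\<Union>F) \<and> tight I z y (\<Inter>F)"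
proof (induction F rule: finite_ne_induct)
  case (singleton x) then show ?case by simp
next
  case (insert x F)
  then have "tight I z y x" "tight I z y (\<Union>F)" "tight I z y (\<Inter>F)" by auto
  then show ?case using tight_un_int[OF gz fI yP] by simp
qed

lemma sum_pair:
  assumes "finite A" "i \<noteq> j"
  shows "(\<Sum>k\<in>A. (if k = i then 1 else 0) - (if k = j then 1 else (0::real)))
     = (if i \<in> A then 1 else 0) - (if j \<in> A then 1 else 0)"
  using assms by (simp add: sum_subtractf sum.delta)

lemma face_tight:
  assumes gz: "gpz I z" and fI: "finite I" and yF: "y \<in> face S (gpset I z)"
    and SI: "S \<subseteq> I" and Sne: "S \<noteq> {}" and SnI: "S \<noteq> I"
  shows "z S = ereal (\<Sum>i\<in>S. y i)"
proof -
  have yP: "y \<in> gpset I z" using yF by (simp add: face_def)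
  have bdd: "bdd_above ((\<lambda>w. \<Sum>i\<in>S. w i) ` gpset I z)"
    using yF unfolding face_def bdd_above_def by blast
  have nov: "\<not> (\<exists>v\<in>tcone I z y. 1 \<le> (\<Sum>i\<in>S. v i))"
    using face_iff[OF gz fI yP, of S] bdd yF by blast
  have pair: "\<forall>i\<in>S. \<forall>j\<in>I - S. \<exists>A. tight I z y A \<and> i \<in> A \<and> j \<notin> A"
  proof (rule ccontr)
    assume "\<not> (\<forall>i\<in>S. \<forall>j\<in>I - S. \<exists>A. tight I z y A \<and> i \<in> A \<and> j \<notin> A)"
    then obtain i j where i: "i \<in> S" and j: "j \<in> I - S" and H: "\<forall>A. tight I z y A \<and> i \<in> A \<longrightarrow> j \<in> A"
      by blast
    have ij: "i \<noteq> j" using i j by auto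
    define v where "v = (\<lambda>k. (if k = i then 1 else 0) - (if k = j then 1 else (0::real)))"
    have "v \<in> tcone I z y"
    proof -
      have "v \<in> vecs I" using i j SI unfolding v_def vecs_def by auto
      moreover have "(\<Sum>k\<in>I. v k) = 0" unfolding v_def using sum_pair[OF fI ij] i j SI by auto
      moreover have "(\<Sum>k\<in>A. v k) \<le> 0" if "A \<subseteq> I" "ereal (\<Sum>k\<in>A. y k) = z A" for A
      proof -
        have "tight I z y A" using that by (simp add: tight_def)
        then have "i \<in> A \<longrightarrow> j \<in> A" using H by blast
        moreover have "finite A" using that fI finite_subset by auto
        ultimately show ?thesis unfolding v_def using sum_pair[OF _ ij] by auto
      qed
      ultimately show ?thesis using yP by (simp add: tcone_def)
    qed
    moreover have "(\<Sum>k\<in>S. v k) = 1"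
    proof -
      have "finite S" using SI fI finite_subset by auto
      then show ?thesis unfolding v_def using sum_pair[OF _ ij] i j by auto
    qed
    ultimately show False using nov by auto
  qed
  define Aij where "Aij i j = (SOME A. tight I z y A \<and> i \<in> A \<and> j \<notin> A)" for i j
  have Aij: "tight I z y (Aij i j) \<and> i \<in> Aij i j \<and> j \<notin> Aij i j" if "i \<in> S" "j \<in> I - S" for i j
    using pair that unfolding Aij_def by (metis (mono_tags, lifting) someI_ex)
  define B where "B i = \<Inter>((\<lambda>j. Aij i j) ` (I - S))" for i
  have IS: "I - S \<noteq> {}" "finite (I - S)" using SI SnI fI by auto
  have Bt: "tight I z y (B i)" "i \<in> B i" "B i \<subseteq> S" if i: "i \<in> S" for i
  proof -
    have "tight I z y (\<Union>((\<lambda>j. Aij i j) ` (I - S))) \<and> tight I z y (\<Inter>((\<lambda>j. Aij i j) ` (I - S)))"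
      using tight_Union[OF gz fI yP, of "(\<lambda>j. Aij i j) ` (I - S)"] IS Aij i by auto
    then show "tight I z y (B i)" unfolding B_def by blast
    show "i \<in> B i" unfolding B_def using Aij i by auto
    have "B i \<subseteq> I" using \<open>tight I z y (B i)\<close> by (simp add: tight_def)
    moreover have "j \<notin> B i" if "j \<in> I - S" for j using Aij[OF i that] that unfolding B_def by auto
    ultimately show "B i \<subseteq> S" by blast
  qed
  have "\<Union>(B ` S) \<subseteq> S" using Bt(3) by blast
  moreover have "S \<subseteq> \<Union>(B ` S)" using Bt(2) by blast
  ultimately have "\<Union>(B ` S) = S" by (rule subset_antisym)
  moreover have "tight I z y (\<Union>(B ` S))"
  proof -
    have fS: "finite (B ` S)" using SI fI finite_subset by blast
    have "B ` S \<noteq> {}" using Sne by simp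
    moreover have "\<forall>A\<in>B ` S. tight I z y A"
    proof
      fix A assume "A \<in> B ` S"
      then obtain i where "i \<in> S" "A = B i" by blast
      then show "tight I z y A" using Bt(1) by simp
    qed
    ultimately show ?thesis using tight_Union[OF gz fI yP fS] by blast
  qed
  ultimately show ?thesis by (simp add: tight_def)
qed


lemma face_glue:
  assumes gz: "gpz I z" and fI: "finite I" and SI: "S \<subseteq> I"
    and yF: "y \<in> face S (gpset I z)" and y'F: "y' \<in> face S (gpset I z)"
    and xv: "x \<in> vecs I" and xS: "\<forall>k\<in>S. x k = y k" and xT: "\<forall>k\<in>I - S. x k = y' k"
  shows "x \<in> face S (gpset I z)"
proof -
  have yP: "y \<in> gpset I z" and y'P: "y' \<in> gpset I z" using yF y'F by (auto simp: face_def)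
  have yv: "y \<in> vecs I" and y'v: "y' \<in> vecs I" using yP y'P by (auto simp: gpset_def)
  have m: "(\<Sum>i\<in>S. y' i) = (\<Sum>i\<in>S. y i)"
  proof -
    have "(\<Sum>i\<in>S. y' i) \<le> (\<Sum>i\<in>S. y i)" using yF y'P unfolding face_def by blast
    moreover have "(\<Sum>i\<in>S. y i) \<le> (\<Sum>i\<in>S. y' i)" using y'F yP unfolding face_def by blast
    ultimately show ?thesis by simp
  qed
  have SxS: "(\<Sum>i\<in>S. x i) = (\<Sum>i\<in>S. y i)" using xS by simp
  have xP: "x \<in> gpset I z"
  proof (cases "S = {} \<or> S = I")
    case True
    then show ?thesis
    proof
      assume "S = {}"
      then have "x = y'" using xT xv y'v by (intro ext) (auto simp: vecs_def)
      then show ?thesis using y'P by simp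
    next
      assume "S = I"
      then have "x = y" using xS xv yv by (intro ext) (auto simp: vecs_def)
      then show ?thesis using yP by simp
    qed
  next
    case False
    then have zS: "z S = ereal (\<Sum>i\<in>S. y i)"
      using face_tight[OF gz fI yF SI] by blast
    have fS: "finite S" using SI fI finite_subset by auto
    have dec: "(\<Sum>i\<in>A. x i) = (\<Sum>i\<in>A \<inter> S. y i) + (\<Sum>i\<in>A - S. y' i)" if "A \<subseteq> I" for A
    proof -
      have fA: "finite A" using that fI finite_subset by auto
      have "(\<Sum>i\<in>A. x i) = (\<Sum>i\<in>A \<inter> S. x i) + (\<Sum>i\<in>A - S. x i)" by (rule sum.Int_Diff[OF fA])
      also have "(\<Sum>i\<in>A \<inter> S. x i) = (\<Sum>i\<in>A \<inter> S. y i)" using xS by (intro sum.cong) auto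
      also have "(\<Sum>i\<in>A - S. x i) = (\<Sum>i\<in>A - S. y' i)" using xT that by (intro sum.cong) auto
      finally show ?thesis .
    qed
    have "ereal (\<Sum>i\<in>I. x i) = z I"
    proof -
      have "(\<Sum>i\<in>I. y' i) = (\<Sum>i\<in>I \<inter> S. y' i) + (\<Sum>i\<in>I - S. y' i)" by (rule sum.Int_Diff[OF fI])
      moreover have "I \<inter> S = S" using SI by auto
      ultimately have "(\<Sum>i\<in>I. x i) = (\<Sum>i\<in>I. y' i)" using dec[of I] m by simp
      then show ?thesis using y'P by (simp add: gpset_def)
    qed
    moreover have "ereal (\<Sum>i\<in>A. x i) \<le> z A" if AI: "A \<subseteq> I" for A
    proof (cases "z A")
      case PInf then show ?thesis by simp
    next
      case MInf then show ?thesis using gz AI by (simp add: gpz_ne_minf)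
    next
      case (real r)
      have fA: "finite A" using AI fI finite_subset by auto
      have un: "(\<Sum>i\<in>A \<union> S. y' i) = (\<Sum>i\<in>A - S. y' i) + (\<Sum>i\<in>S. y' i)"
      proof -
        have "(\<Sum>i\<in>A \<union> S. y' i) = (\<Sum>i\<in>(A \<union> S) \<inter> S. y' i) + (\<Sum>i\<in>(A \<union> S) - S. y' i)"
          by (rule sum.Int_Diff) (simp add: fA fS)
        moreover have "(A \<union> S) \<inter> S = S" by blast
        moreover have "(A \<union> S) - S = A - S" by blast
        ultimately show ?thesis by simp
      qed
      have sm: "submod_fin I z" using gz by (simp add: gpz_def)
      have "z A \<noteq> \<infinity> \<longrightarrow> z S \<noteq> \<infinity> \<longrightarrow> z (A \<union> S) + z (A \<inter> S) \<le> z A + z S"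
        using sm AI SI unfolding submod_fin_def by blast
      then have sub: "z (A \<union> S) + z (A \<inter> S) \<le> ereal (r + (\<Sum>i\<in>S. y i))" using real zS by simp
      have y'A: "\<And>C. C \<subseteq> I \<Longrightarrow> ereal (\<Sum>i\<in>C. y' i) \<le> z C" using y'P by (simp add: gpset_def)
      have yA: "\<And>C. C \<subseteq> I \<Longrightarrow> ereal (\<Sum>i\<in>C. y i) \<le> z C" using yP by (simp add: gpset_def)
      have "ereal (\<Sum>i\<in>A \<union> S. y' i) \<le> z (A \<union> S)" using AI SI by (intro y'A) simp
      moreover have "ereal (\<Sum>i\<in>A \<inter> S. y i) \<le> z (A \<inter> S)" using AI by (intro yA) auto
      ultimately have "ereal (\<Sum>i\<in>A \<union> S. y' i) + ereal (\<Sum>i\<in>A \<inter> S. y i) \<le> z (A \<union> S) + z (A \<inter> S)"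
        by (rule add_mono)
      then have "ereal (\<Sum>i\<in>A \<union> S. y' i) + ereal (\<Sum>i\<in>A \<inter> S. y i) \<le> ereal (r + (\<Sum>i\<in>S. y i))"
        using sub by (rule order_trans)
      then have "ereal ((\<Sum>i\<in>A \<union> S. y' i) + (\<Sum>i\<in>A \<inter> S. y i)) \<le> ereal (r + (\<Sum>i\<in>S. y i))"
        by simp
      then have "(\<Sum>i\<in>A \<union> S. y' i) + (\<Sum>i\<in>A \<inter> S. y i) \<le> r + (\<Sum>i\<in>S. y i)" by simp
      then have "(\<Sum>i\<in>A. x i) \<le> r" using dec[OF AI] un m by simp
      then show ?thesis using real by simp
    qed
    ultimately show ?thesis using xv by (simp add: gpset_def)
  qed
  have "\<forall>w\<in>gpset I z. (\<Sum>i\<in>S. w i) \<le> (\<Sum>i\<in>S. x i)"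
    using yF SxS unfolding face_def by auto
  then show ?thesis using xP by (simp add: face_def)
qed

lemma restr_vecs: "restr S w \<in> vecs S"
  by (simp add: restr_def vecs_def)

lemma face_tensor:
  assumes gz: "gpz I z" and fI: "finite I" and SI: "S \<subseteq> I"
    and y1: "y1 \<in> vecs S" and y2: "y2 \<in> vecs (I - S)"
  shows "(y1 \<in> restr S ` face S (gpset I z) \<and> y2 \<in> restr (I - S) ` face S (gpset I z))
     \<longleftrightarrow> (\<lambda>k. y1 k + y2 k) \<in> face S (gpset I z)"
proof -
  define x where "x = (\<lambda>k. y1 k + y2 k)"
  have xv: "x \<in> vecs I" using y1 y2 SI unfolding x_def vecs_def by auto
  have r1: "restr S x = y1" using y1 y2 unfolding x_def restr_def vecs_def by (intro ext) auto
  have r2: "restr (I - S) x = y2" using y1 y2 SI unfolding x_def restr_def vecs_def by (intro ext) auto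
  show ?thesis
  proof
    assume "y1 \<in> restr S ` face S (gpset I z) \<and> y2 \<in> restr (I - S) ` face S (gpset I z)"
    then obtain y y' where yF: "y \<in> face S (gpset I z)" "y1 = restr S y"
      and y'F: "y' \<in> face S (gpset I z)" "y2 = restr (I - S) y'" by blast
    have "\<forall>k\<in>S. x k = y k"
    proof
      fix k assume "k \<in> S"
      then show "x k = y k" using fun_cong[OF r1, of k] yF(2) fun_cong[OF yF(2), of k] by (simp add: restr_def)
    qed
    moreover have "\<forall>k\<in>I - S. x k = y' k"
    proof
      fix k assume "k \<in> I - S"
      then show "x k = y' k" using fun_cong[OF r2, of k] fun_cong[OF y'F(2), of k] by (simp add: restr_def)
    qed
    ultimately have "x \<in> face S (gpset I z)" using face_glue[OF gz fI SI yF(1) y'F(1) xv] by blast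
    then show "(\<lambda>k. y1 k + y2 k) \<in> face S (gpset I z)" by (simp add: x_def)
  next
    assume "(\<lambda>k. y1 k + y2 k) \<in> face S (gpset I z)"
    then have "x \<in> face S (gpset I z)" by (simp add: x_def)
    then show "y1 \<in> restr S ` face S (gpset I z) \<and> y2 \<in> restr (I - S) ` face S (gpset I z)"
      using r1 r2 by (metis image_eqI)
  qed
qed


context
  fixes sc :: "'k::field \<Rightarrow> 'r::ring_1 \<Rightarrow> 'r"
  assumes ka: "k_algebra sc"
begin

lemma sc_add_l: "sc (a + b) x = sc a x + sc b x" using ka by (simp add: k_algebra_def)
lemma sc_add_r: "sc a (x + y) = sc a x + sc a y" using ka by (simp add: k_algebra_def)
lemma sc_mult: "sc (a * b) x = sc a (sc b x)" using ka by (simp add: k_algebra_def)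
lemma sc_one: "sc 1 x = x" using ka by (simp add: k_algebra_def)
lemma sc_ml: "sc a (x * y) = sc a x * y" using ka unfolding k_algebra_def by blast
lemma sc_mr: "sc a (x * y) = x * sc a y" using ka unfolding k_algebra_def by blast

lemma sc_zero_l: "sc 0 x = 0"
proof -
  have "sc (0 + 0) x = sc 0 x + sc 0 x" by (rule sc_add_l)
  then show ?thesis by simp
qed

lemma sc_zero_r: "sc a 0 = 0"
proof -
  have "sc a (0 + 0) = sc a 0 + sc a 0" by (rule sc_add_r)
  then show ?thesis by simp
qed

lemma sc_neg_l: "sc (- a) x = - sc a x"
proof -
  have "sc (a + - a) x = sc a x + sc (- a) x" by (rule sc_add_l)
  then have "0 = sc a x + sc (- a) x" by (simp add: sc_zero_l)
  then show ?thesis by (simp add: eq_neg_iff_add_eq_0 add.commute)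
qed

lemma sc_neg_r: "sc a (- x) = - sc a x"
proof -
  have "sc a (x + - x) = sc a x + sc a (- x)" by (rule sc_add_r)
  then have "0 = sc a x + sc a (- x)" by (simp add: sc_zero_r)
  then show ?thesis by (simp add: eq_neg_iff_add_eq_0 add.commute)
qed

lemma sc_diff_l: "sc (a - b) x = sc a x - sc b x"
  using sc_add_l[of a "- b" x] by (simp add: sc_neg_l)

lemma sc_sum_l: "sc (\<Sum>i\<in>A. h i) x = (\<Sum>i\<in>A. sc (h i) x)"
proof (induction A rule: infinite_finite_induct)
  case (infinite A) then show ?case by (simp add: sc_zero_l)
next
  case empty then show ?case by (simp add: sc_zero_l)
next
  case (insert a A) then show ?case by (simp add: sc_add_l)
qed

lemma sc_sum_r: "sc a (\<Sum>i\<in>A. h i) = (\<Sum>i\<in>A. sc a (h i))"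
proof (induction A rule: infinite_finite_induct)
  case (infinite A) then show ?case by (simp add: sc_zero_r)
next
  case empty then show ?case by (simp add: sc_zero_r)
next
  case (insert a A) then show ?case by (simp add: sc_add_r)
qed

lemma sv_sum:
  assumes sv: "strong_val sc F I f" and fD: "finite D" and DB: "D \<subseteq> basis F I"
    and rel: "\<forall>x. (\<Sum>P\<in>D. e P * (if x \<in> P then 1 else 0)) = 0"
  shows "(\<Sum>P\<in>D. sc (e P) (f P)) = 0"
proof -
  define c where "c P = (if P \<in> D then e P else 0)" for P
  have sub: "{P. c P \<noteq> 0} \<subseteq> D" unfolding c_def by auto
  have fin: "finite {P. c P \<noteq> 0}" using finite_subset[OF sub fD] .
  have "\<forall>x. (\<Sum>P | c P \<noteq> 0. c P * (if x \<in> P then 1 else 0)) = 0"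
  proof
    fix x
    have "(\<Sum>P | c P \<noteq> 0. c P * (if x \<in> P then 1 else 0)) = (\<Sum>P\<in>D. c P * (if x \<in> P then 1 else 0))"
      by (rule sum.mono_neutral_left[OF fD sub]) auto
    also have "\<dots> = (\<Sum>P\<in>D. e P * (if x \<in> P then 1 else 0))" by (rule sum.cong) (auto simp: c_def)
    finally show "(\<Sum>P | c P \<noteq> 0. c P * (if x \<in> P then 1 else 0)) = 0" using rel by simp
  qed
  then have "(\<Sum>P | c P \<noteq> 0. sc (c P) (f P)) = 0"
    using sv fin sub DB unfolding strong_val_def by blast
  moreover have "(\<Sum>P | c P \<noteq> 0. sc (c P) (f P)) = (\<Sum>P\<in>D. sc (c P) (f P))"
    by (rule sum.mono_neutral_left[OF fD sub]) (auto simp: sc_zero_l)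
  moreover have "(\<Sum>P\<in>D. sc (c P) (f P)) = (\<Sum>P\<in>D. sc (e P) (f P))"
    by (rule sum.cong) (auto simp: c_def)
  ultimately show ?thesis by simp
qed

lemma tensor_main:
  fixes f g :: "('e \<Rightarrow> real) set \<Rightarrow> 'r"
  assumes fsv: "strong_val sc F S1 f" and gsv: "strong_val sc F S2 g"
  shows "finite AA \<Longrightarrow> finite BB \<Longrightarrow> AA \<subseteq> basis F S1 \<Longrightarrow> BB \<subseteq> basis F S2 \<Longrightarrow>
    (\<forall>y1 y2. (\<Sum>\<alpha>\<in>AA. \<Sum>\<beta>\<in>BB. C \<alpha> \<beta> * (if y1 \<in> \<alpha> then 1 else 0) * (if y2 \<in> \<beta> then 1 else 0)) = 0) \<Longrightarrow>
    (\<Sum>\<alpha>\<in>AA. \<Sum>\<beta>\<in>BB. sc (C \<alpha> \<beta>) (f \<alpha> * g \<beta>)) = 0"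
proof (induction "card AA" arbitrary: AA C rule: less_induct)
  case less
  note fA = less.prems(1) and fB = less.prems(2) and AB = less.prems(3) and BB = less.prems(4)
    and rel = less.prems(5)
  show ?case
  proof (cases "\<exists>lam. (\<forall>y. (\<Sum>\<alpha>\<in>AA. lam \<alpha> * (if y \<in> \<alpha> then 1 else (0::'k))) = 0) \<and> (\<exists>\<alpha>0\<in>AA. lam \<alpha>0 \<noteq> 0)")
    case True
    then obtain lam \<alpha>0 where lrel: "\<forall>y. (\<Sum>\<alpha>\<in>AA. lam \<alpha> * (if y \<in> \<alpha> then 1 else (0::'k))) = 0"
      and a0: "\<alpha>0 \<in> AA" and l0: "lam \<alpha>0 \<noteq> 0" by blast
    define AA' where "AA' = AA - {\<alpha>0}"
    define C' where "C' \<alpha> \<beta> = C \<alpha> \<beta> - (lam \<alpha> / lam \<alpha>0) * C \<alpha>0 \<beta>" for \<alpha> \<beta>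
    have fA': "finite AA'" using fA by (simp add: AA'_def)
    have cardlt: "card AA' < card AA" using fA a0 unfolding AA'_def by (rule card_Diff1_less)
    have split: "(\<Sum>\<alpha>\<in>AA. h \<alpha>) = h \<alpha>0 + (\<Sum>\<alpha>\<in>AA'. h \<alpha>)" for h :: "_ \<Rightarrow> 'x::comm_monoid_add"
      using fA a0 unfolding AA'_def by (simp add: sum.remove)
    have fsum: "(\<Sum>\<alpha>\<in>AA. sc (lam \<alpha>) (f \<alpha>)) = 0"
      by (rule sv_sum[OF fsv fA AB lrel])
    have ind': "(\<Sum>\<alpha>\<in>AA'. (lam \<alpha> / lam \<alpha>0) * (if y \<in> \<alpha> then 1 else 0)) = - (if y \<in> \<alpha>0 then 1 else 0)" for y
    proof -
      have "lam \<alpha>0 * (if y \<in> \<alpha>0 then 1 else 0) + (\<Sum>\<alpha>\<in>AA'. lam \<alpha> * (if y \<in> \<alpha> then 1 else 0)) = 0"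
        using lrel split by metis
      then have "(\<Sum>\<alpha>\<in>AA'. lam \<alpha> * (if y \<in> \<alpha> then 1 else 0)) = - (lam \<alpha>0 * (if y \<in> \<alpha>0 then 1 else 0))"
        by (simp add: eq_neg_iff_add_eq_0 add.commute)
      then have "(\<Sum>\<alpha>\<in>AA'. lam \<alpha> * (if y \<in> \<alpha> then 1 else 0)) / lam \<alpha>0 = - (if y \<in> \<alpha>0 then 1 else 0)"
        using l0 by simp
      then show ?thesis by (simp add: sum_divide_distrib)
    qed
    have fval': "(\<Sum>\<alpha>\<in>AA'. sc (lam \<alpha> / lam \<alpha>0) (f \<alpha>)) = - f \<alpha>0"
    proof -
      have "sc (lam \<alpha>0) (f \<alpha>0) + (\<Sum>\<alpha>\<in>AA'. sc (lam \<alpha>) (f \<alpha>)) = 0" using fsum split by metis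
      then have e1: "(\<Sum>\<alpha>\<in>AA'. sc (lam \<alpha>) (f \<alpha>)) = - sc (lam \<alpha>0) (f \<alpha>0)"
        by (simp add: eq_neg_iff_add_eq_0 add.commute)
      have "(\<Sum>\<alpha>\<in>AA'. sc (lam \<alpha> / lam \<alpha>0) (f \<alpha>)) = (\<Sum>\<alpha>\<in>AA'. sc (inverse (lam \<alpha>0)) (sc (lam \<alpha>) (f \<alpha>)))"
        by (rule sum.cong[OF refl]) (metis divide_inverse mult.commute sc_mult)
      also have "\<dots> = sc (inverse (lam \<alpha>0)) (\<Sum>\<alpha>\<in>AA'. sc (lam \<alpha>) (f \<alpha>))" by (simp add: sc_sum_r)
      also have "\<dots> = - sc (inverse (lam \<alpha>0)) (sc (lam \<alpha>0) (f \<alpha>0))" by (simp add: e1 sc_neg_r)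
      also have "\<dots> = - f \<alpha>0" using l0 by (simp add: sc_mult[symmetric] sc_one)
      finally show ?thesis .
    qed
    have rel': "\<forall>y1 y2. (\<Sum>\<alpha>\<in>AA'. \<Sum>\<beta>\<in>BB. C' \<alpha> \<beta> * (if y1 \<in> \<alpha> then 1 else 0) * (if y2 \<in> \<beta> then 1 else 0)) = 0"
    proof (intro allI)
      fix y1 y2 :: "'e \<Rightarrow> real"
      let ?i1 = "\<lambda>\<alpha>. (if y1 \<in> \<alpha> then 1 else (0::'k))" and ?i2 = "\<lambda>\<beta>. (if y2 \<in> \<beta> then 1 else (0::'k))"
      have "(\<Sum>\<alpha>\<in>AA'. \<Sum>\<beta>\<in>BB. C' \<alpha> \<beta> * ?i1 \<alpha> * ?i2 \<beta>)
        = (\<Sum>\<alpha>\<in>AA'. \<Sum>\<beta>\<in>BB. C \<alpha> \<beta> * ?i1 \<alpha> * ?i2 \<beta>)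
          - (\<Sum>\<beta>\<in>BB. C \<alpha>0 \<beta> * ?i2 \<beta> * (\<Sum>\<alpha>\<in>AA'. (lam \<alpha> / lam \<alpha>0) * ?i1 \<alpha>))"
        by (simp add: C'_def algebra_simps sum_subtractf sum_distrib_left sum_distrib_right sum.swap[of _ AA' BB])
      also have "\<dots> = (\<Sum>\<alpha>\<in>AA'. \<Sum>\<beta>\<in>BB. C \<alpha> \<beta> * ?i1 \<alpha> * ?i2 \<beta>) + (\<Sum>\<beta>\<in>BB. C \<alpha>0 \<beta> * ?i1 \<alpha>0 * ?i2 \<beta>)"
      proof -
        have "(\<Sum>\<beta>\<in>BB. C \<alpha>0 \<beta> * ?i2 \<beta> * (\<Sum>\<alpha>\<in>AA'. (lam \<alpha> / lam \<alpha>0) * ?i1 \<alpha>))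
            = (\<Sum>\<beta>\<in>BB. - (C \<alpha>0 \<beta> * ?i1 \<alpha>0 * ?i2 \<beta>))"
          unfolding ind' by (rule sum.cong) (simp_all add: algebra_simps)
        then show ?thesis by (simp add: sum_negf)
      qed
      also have "\<dots> = (\<Sum>\<alpha>\<in>AA. \<Sum>\<beta>\<in>BB. C \<alpha> \<beta> * ?i1 \<alpha> * ?i2 \<beta>)"
        by (simp add: split)
      also have "\<dots> = 0" using rel by blast
      finally show "(\<Sum>\<alpha>\<in>AA'. \<Sum>\<beta>\<in>BB. C' \<alpha> \<beta> * ?i1 \<alpha> * ?i2 \<beta>) = 0" .
    qed
    have IH: "(\<Sum>\<alpha>\<in>AA'. \<Sum>\<beta>\<in>BB. sc (C' \<alpha> \<beta>) (f \<alpha> * g \<beta>)) = 0"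
      using less.hyps[OF cardlt fA' fB _ BB rel'] AB unfolding AA'_def by blast
    have "(\<Sum>\<alpha>\<in>AA'. \<Sum>\<beta>\<in>BB. sc (C' \<alpha> \<beta>) (f \<alpha> * g \<beta>))
      = (\<Sum>\<alpha>\<in>AA'. \<Sum>\<beta>\<in>BB. sc (C \<alpha> \<beta>) (f \<alpha> * g \<beta>))
        - (\<Sum>\<beta>\<in>BB. \<Sum>\<alpha>\<in>AA'. sc (C \<alpha>0 \<beta>) (sc (lam \<alpha> / lam \<alpha>0) (f \<alpha>) * g \<beta>))"
    proof -
      have "sc (C' \<alpha> \<beta>) (f \<alpha> * g \<beta>) = sc (C \<alpha> \<beta>) (f \<alpha> * g \<beta>) - sc (C \<alpha>0 \<beta>) (sc (lam \<alpha> / lam \<alpha>0) (f \<alpha>) * g \<beta>)"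
        for \<alpha> \<beta>
      proof -
        have "sc ((lam \<alpha> / lam \<alpha>0) * C \<alpha>0 \<beta>) (f \<alpha> * g \<beta>) = sc (C \<alpha>0 \<beta>) (sc (lam \<alpha> / lam \<alpha>0) (f \<alpha> * g \<beta>))"
          by (subst mult.commute) (rule sc_mult)
        also have "\<dots> = sc (C \<alpha>0 \<beta>) (sc (lam \<alpha> / lam \<alpha>0) (f \<alpha>) * g \<beta>)" by (simp add: sc_ml)
        finally show ?thesis unfolding C'_def by (simp add: sc_diff_l)
      qed
      then show ?thesis by (simp add: sum_subtractf sum.swap[of _ AA' BB])
    qed
    also have "(\<Sum>\<beta>\<in>BB. \<Sum>\<alpha>\<in>AA'. sc (C \<alpha>0 \<beta>) (sc (lam \<alpha> / lam \<alpha>0) (f \<alpha>) * g \<beta>))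
        = (\<Sum>\<beta>\<in>BB. sc (C \<alpha>0 \<beta>) ((\<Sum>\<alpha>\<in>AA'. sc (lam \<alpha> / lam \<alpha>0) (f \<alpha>)) * g \<beta>))"
      by (simp add: sc_sum_r sum_distrib_right)
    also have "\<dots> = - (\<Sum>\<beta>\<in>BB. sc (C \<alpha>0 \<beta>) (f \<alpha>0 * g \<beta>))"
      by (simp add: fval' sc_neg_r sum_negf)
    finally have "(\<Sum>\<alpha>\<in>AA'. \<Sum>\<beta>\<in>BB. sc (C' \<alpha> \<beta>) (f \<alpha> * g \<beta>))
      = (\<Sum>\<alpha>\<in>AA'. \<Sum>\<beta>\<in>BB. sc (C \<alpha> \<beta>) (f \<alpha> * g \<beta>)) + (\<Sum>\<beta>\<in>BB. sc (C \<alpha>0 \<beta>) (f \<alpha>0 * g \<beta>))"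
      by simp
    also have "\<dots> = (\<Sum>\<alpha>\<in>AA. \<Sum>\<beta>\<in>BB. sc (C \<alpha> \<beta>) (f \<alpha> * g \<beta>))" by (simp add: split add.commute)
    finally show ?thesis using IH by simp
  next
    case False
    have z: "\<forall>\<alpha>\<in>AA. (\<Sum>\<beta>\<in>BB. C \<alpha> \<beta> * (if y2 \<in> \<beta> then 1 else 0)) = 0" for y2
    proof -
      have "\<forall>y1. (\<Sum>\<alpha>\<in>AA. (\<Sum>\<beta>\<in>BB. C \<alpha> \<beta> * (if y2 \<in> \<beta> then 1 else 0)) * (if y1 \<in> \<alpha> then 1 else 0)) = 0"
      proof
        fix y1
        have "(\<Sum>\<alpha>\<in>AA. (\<Sum>\<beta>\<in>BB. C \<alpha> \<beta> * (if y2 \<in> \<beta> then 1 else 0)) * (if y1 \<in> \<alpha> then 1 else 0))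
          = (\<Sum>\<alpha>\<in>AA. \<Sum>\<beta>\<in>BB. C \<alpha> \<beta> * (if y1 \<in> \<alpha> then 1 else 0) * (if y2 \<in> \<beta> then 1 else 0))"
          by (rule sum.cong[OF refl]) (simp add: sum_distrib_right algebra_simps)
        then show "(\<Sum>\<alpha>\<in>AA. (\<Sum>\<beta>\<in>BB. C \<alpha> \<beta> * (if y2 \<in> \<beta> then 1 else 0)) * (if y1 \<in> \<alpha> then 1 else 0)) = 0"
          using rel by simp
      qed
      then have R1: "\<forall>y1. (\<Sum>\<alpha>\<in>AA. (\<lambda>\<alpha>. \<Sum>\<beta>\<in>BB. C \<alpha> \<beta> * (if y2 \<in> \<beta> then 1 else 0)) \<alpha> * (if y1 \<in> \<alpha> then 1 else 0)) = 0"
        by simp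
      show ?thesis
      proof (rule ccontr)
        assume "\<not> (\<forall>\<alpha>\<in>AA. (\<Sum>\<beta>\<in>BB. C \<alpha> \<beta> * (if y2 \<in> \<beta> then 1 else 0)) = 0)"
        then obtain a1 where a1: "a1 \<in> AA" "(\<lambda>\<alpha>. \<Sum>\<beta>\<in>BB. C \<alpha> \<beta> * (if y2 \<in> \<beta> then 1 else 0)) a1 \<noteq> 0" by auto
        have "\<exists>lam. (\<forall>y. (\<Sum>\<alpha>\<in>AA. lam \<alpha> * (if y \<in> \<alpha> then 1 else (0::'k))) = 0) \<and> (\<exists>\<alpha>0\<in>AA. lam \<alpha>0 \<noteq> 0)"
          using R1 a1 by (intro exI[of _ "\<lambda>\<alpha>. \<Sum>\<beta>\<in>BB. C \<alpha> \<beta> * (if y2 \<in> \<beta> then 1 else 0)"]) auto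
        then show False using False by blast
      qed
    qed
    have gz: "(\<Sum>\<beta>\<in>BB. sc (C \<alpha> \<beta>) (g \<beta>)) = 0" if "\<alpha> \<in> AA" for \<alpha>
      using sv_sum[OF gsv fB BB] z that by blast
    have "(\<Sum>\<alpha>\<in>AA. \<Sum>\<beta>\<in>BB. sc (C \<alpha> \<beta>) (f \<alpha> * g \<beta>)) = (\<Sum>\<alpha>\<in>AA. f \<alpha> * (\<Sum>\<beta>\<in>BB. sc (C \<alpha> \<beta>) (g \<beta>)))"
      by (simp add: sc_mr sum_distrib_left)
    also have "\<dots> = 0" using gz by simp
    finally show ?thesis .
  qed
qed

end


lemma cop_eq: "cop I S P = (if bdd_above ((\<lambda>x. \<Sum>i\<in>S. x i) ` P)
   then Some (restr S ` face S P, restr (I - S) ` face S P) else None)"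
  by (simp add: cop_def face_def Let_def)

lemma regroup:
  assumes "finite M"
  shows "(\<Sum>\<alpha>\<in>A ` M. \<Sum>\<beta>\<in>B ` M. \<Sum>P\<in>{P\<in>M. A P = \<alpha> \<and> B P = \<beta>}. h P) = (sum h M :: 'x::comm_monoid_add)"
proof -
  have "(\<Sum>\<alpha>\<in>A ` M. \<Sum>\<beta>\<in>B ` M. \<Sum>P\<in>{P\<in>M. A P = \<alpha> \<and> B P = \<beta>}. h P)
     = (\<Sum>p\<in>A ` M \<times> B ` M. \<Sum>P\<in>{P\<in>M. A P = fst p \<and> B P = snd p}. h P)"
    by (simp add: sum.cartesian_product split_def)
  also have "\<dots> = (\<Sum>p\<in>A ` M \<times> B ` M. \<Sum>P\<in>{P\<in>M. (\<lambda>P. (A P, B P)) P = p}. h P)"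
    by (rule sum.cong) (auto intro!: sum.cong)
  also have "\<dots> = sum h M"
    by (rule sum.group) (use assms in auto)
  finally show ?thesis .
qed

lemma delta_val:
  fixes sc :: "'k::field \<Rightarrow> 'r::ring_1 \<Rightarrow> 'r" and F :: "('e set \<times> ('e \<Rightarrow> real) set) set"
  assumes ka: "k_algebra sc" and hs: "hopf_sub F" and fI: "finite I" and SI: "S \<subseteq> I"
    and fsv: "strong_val sc F S f" and gsv: "strong_val sc F (I - S) g"
  shows "strong_val sc F I (\<lambda>P. case cop I S P of None \<Rightarrow> 0 | Some (A, B) \<Rightarrow> f A * g B)"
  unfolding strong_val_def
proof (intro allI impI)
  fix c :: "('e \<Rightarrow> real) set \<Rightarrow> 'k"
  assume fin: "finite {P. c P \<noteq> 0}" and sub: "{P. c P \<noteq> 0} \<subseteq> basis F I"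
    and rel: "\<forall>x. (\<Sum>P | c P \<noteq> 0. c P * (if x \<in> P then 1 else 0)) = 0"
  define M where "M = {P. c P \<noteq> 0}"
  have fM: "finite M" using fin by (simp add: M_def)
  have MF: "(I, P) \<in> F" if "P \<in> M" for P using sub that by (auto simp: M_def basis_def)
  have Mgp: "ext_gp I P" if "P \<in> M" for P using hs MF[OF that] by (simp add: hopf_sub_def)
  define bd where "bd P = bdd_above ((\<lambda>x::'e\<Rightarrow>real. \<Sum>i\<in>S. x i) ` P)" for P
  define A where "A P = restr S ` face S (P::('e\<Rightarrow>real) set)" for P
  define B where "B P = restr (I - S) ` face S (P::('e\<Rightarrow>real) set)" for P
  define M' where "M' = {P\<in>M. bd P}"
  have fM': "finite M'" using fM by (simp add: M'_def)
  have copP: "cop I S P = (if bd P then Some (A P, B P) else None)" for P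
    by (simp add: cop_eq bd_def A_def B_def)
  have ABF: "(S, A P) \<in> F \<and> (I - S, B P) \<in> F" if "P \<in> M'" for P
  proof -
    have "P \<in> M" "bd P" using that by (auto simp: M'_def)
    then show ?thesis using hs MF[of P] SI copP[of P] unfolding hopf_sub_def by auto
  qed
  have frel: "(\<Sum>P\<in>M'. c P * (if x \<in> face S P then 1 else 0)) = 0" for x
  proof -
    have "(\<Sum>P\<in>M. c P * (if bdd_above ((\<lambda>y. \<Sum>i\<in>S. y i) ` P) \<and> x \<in> face S P then 1 else 0)) = 0"
      by (rule faceval) (use Mgp fI fM rel in \<open>auto simp: M_def\<close>)
    moreover have "(\<Sum>P\<in>M. c P * (if bdd_above ((\<lambda>y. \<Sum>i\<in>S. y i) ` P) \<and> x \<in> face S P then 1 else 0))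
        = (\<Sum>P\<in>M'. c P * (if x \<in> face S P then 1 else 0))"
      by (rule sum.mono_neutral_cong_right) (use fM in \<open>auto simp: M'_def bd_def\<close>)
    ultimately show ?thesis by simp
  qed
  have trel: "(\<Sum>P\<in>M'. c P * (if y1 \<in> A P then 1 else 0) * (if y2 \<in> B P then 1 else 0)) = 0" for y1 y2
  proof (cases "y1 \<in> vecs S \<and> y2 \<in> vecs (I - S)")
    case True
    have "(\<Sum>P\<in>M'. c P * (if y1 \<in> A P then 1 else 0) * (if y2 \<in> B P then 1 else 0))
        = (\<Sum>P\<in>M'. c P * (if (\<lambda>k. y1 k + y2 k) \<in> face S P then 1 else 0))"
    proof (rule sum.cong[OF refl])
      fix P assume P: "P \<in> M'"
      then have "P \<in> M" by (simp add: M'_def)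
      then obtain z where z: "gpz I z" "P = gpset I z" using Mgp ext_gpE by blast
      have "(y1 \<in> A P \<and> y2 \<in> B P) \<longleftrightarrow> (\<lambda>k. y1 k + y2 k) \<in> face S P"
        using face_tensor[OF z(1) fI SI, of y1 y2] True z(2) by (simp add: A_def B_def)
      then show "c P * (if y1 \<in> A P then 1 else 0) * (if y2 \<in> B P then 1 else 0)
          = c P * (if (\<lambda>k. y1 k + y2 k) \<in> face S P then 1 else 0)" by auto
    qed
    then show ?thesis using frel by simp
  next
    case False
    have "A P \<subseteq> vecs S" "B P \<subseteq> vecs (I - S)" for P
      by (auto simp: A_def B_def restr_vecs)
    then have z: "c P * (if y1 \<in> A P then 1 else 0) * (if y2 \<in> B P then 1 else (0::'k)) = 0" for P
      using False by auto
    show ?thesis by (rule sum.neutral) (use z in blast)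
  qed
  define C where "C \<alpha> \<beta> = (\<Sum>P\<in>{P\<in>M'. A P = \<alpha> \<and> B P = \<beta>}. c P)" for \<alpha> \<beta>
  have AAB: "A ` M' \<subseteq> basis F S" "B ` M' \<subseteq> basis F (I - S)" using ABF by (auto simp: basis_def)
  have crel: "\<forall>y1 y2. (\<Sum>\<alpha>\<in>A ` M'. \<Sum>\<beta>\<in>B ` M'. C \<alpha> \<beta> * (if y1 \<in> \<alpha> then 1 else 0) * (if y2 \<in> \<beta> then 1 else 0)) = 0"
  proof (intro allI)
    fix y1 y2
    have "(\<Sum>\<alpha>\<in>A ` M'. \<Sum>\<beta>\<in>B ` M'. C \<alpha> \<beta> * (if y1 \<in> \<alpha> then 1 else 0) * (if y2 \<in> \<beta> then 1 else 0))
       = (\<Sum>\<alpha>\<in>A ` M'. \<Sum>\<beta>\<in>B ` M'. \<Sum>P\<in>{P\<in>M'. A P = \<alpha> \<and> B P = \<beta>}. c P * (if y1 \<in> A P then 1 else 0) * (if y2 \<in> B P then 1 else 0))"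
      unfolding C_def by (intro sum.cong refl) (simp add: sum_distrib_right)
    also have "\<dots> = (\<Sum>P\<in>M'. c P * (if y1 \<in> A P then 1 else 0) * (if y2 \<in> B P then 1 else 0))"
      by (rule regroup[OF fM'])
    also have "\<dots> = 0" by (rule trel)
    finally show "(\<Sum>\<alpha>\<in>A ` M'. \<Sum>\<beta>\<in>B ` M'. C \<alpha> \<beta> * (if y1 \<in> \<alpha> then 1 else 0) * (if y2 \<in> \<beta> then 1 else 0)) = 0" .
  qed
  have T0: "(\<Sum>\<alpha>\<in>A ` M'. \<Sum>\<beta>\<in>B ` M'. sc (C \<alpha> \<beta>) (f \<alpha> * g \<beta>)) = 0"
    by (rule tensor_main[OF ka fsv gsv]) (use fM' AAB crel in auto)
  have "(\<Sum>\<alpha>\<in>A ` M'. \<Sum>\<beta>\<in>B ` M'. sc (C \<alpha> \<beta>) (f \<alpha> * g \<beta>))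
     = (\<Sum>\<alpha>\<in>A ` M'. \<Sum>\<beta>\<in>B ` M'. \<Sum>P\<in>{P\<in>M'. A P = \<alpha> \<and> B P = \<beta>}. sc (c P) (f (A P) * g (B P)))"
    unfolding C_def by (intro sum.cong refl) (simp add: sc_sum_l[OF ka])
  also have "\<dots> = (\<Sum>P\<in>M'. sc (c P) (f (A P) * g (B P)))" by (rule regroup[OF fM'])
  finally have T1: "(\<Sum>P\<in>M'. sc (c P) (f (A P) * g (B P))) = 0" using T0 by simp
  have "(\<Sum>P | c P \<noteq> 0. sc (c P) (case cop I S P of None \<Rightarrow> 0 | Some (A, B) \<Rightarrow> f A * g B))
      = (\<Sum>P\<in>M. sc (c P) (case cop I S P of None \<Rightarrow> 0 | Some (A, B) \<Rightarrow> f A * g B))" by (simp add: M_def)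
  also have "\<dots> = (\<Sum>P\<in>M'. sc (c P) (f (A P) * g (B P)))"
    by (rule sum.mono_neutral_cong_right) (use fM in \<open>auto simp: M'_def copP sc_zero_r[OF ka]\<close>)
  finally show "(\<Sum>P | c P \<noteq> 0. sc (c P) (case cop I S P of None \<Rightarrow> 0 | Some (A, B) \<Rightarrow> f A * g B)) = 0"
    using T1 by simp
qed


lemma comp_map_single: "comp_map I [S1] [f1] = f1"
  by (simp add: comp_map_def fun_eq_iff)

lemma comp_map_cons: "comp_map I (S1 # S2 # Ss) (f1 # fs) P =
   (case cop I S1 P of None \<Rightarrow> 0 | Some (A, B) \<Rightarrow> f1 A * comp_map (I - S1) (S2 # Ss) fs B)"
proof (cases "cop I S1 P")
  case None then show ?thesis by (simp add: comp_map_def)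
next
  case (Some AB)
  obtain A B where AB: "AB = (A, B)" by (cases AB)
  show ?thesis
  proof (cases "icop (I - S1) (S2 # Ss) B")
    case None then show ?thesis using Some AB by (simp add: comp_map_def)
  next
    case (Some Ps) then show ?thesis using \<open>cop I S1 P = Some AB\<close> AB by (simp add: comp_map_def)
  qed
qed

lemma main1:
  fixes sc :: "'k::field \<Rightarrow> 'r::ring_1 \<Rightarrow> 'r" and F :: "('e set \<times> ('e \<Rightarrow> real) set) set"
  assumes ka: "k_algebra sc" and hs: "hopf_sub F"
  shows "\<forall>I fs. finite I \<longrightarrow> set_decomp I S \<longrightarrow> S \<noteq> [] \<longrightarrow> length fs = length S \<longrightarrow>
     (\<forall>i < length S. strong_val sc F (S ! i) (fs ! i)) \<longrightarrow> strong_val sc F I (comp_map I S fs)"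
proof (induction S)
  case Nil then show ?case by simp
next
  case (Cons S1 rest)
  show ?case
  proof (intro allI impI)
    fix I and fs :: "(('e \<Rightarrow> real) set \<Rightarrow> 'r) list"
    assume fI: "finite I" and sd: "set_decomp I (S1 # rest)" and len: "length fs = length (S1 # rest)"
      and sv: "\<forall>i < length (S1 # rest). strong_val sc F ((S1 # rest) ! i) (fs ! i)"
    obtain f1 fs' where fs: "fs = f1 # fs'" using len by (cases fs) auto
    have sv1: "strong_val sc F S1 f1" using sv fs by force
    have U: "\<Union>(set (S1 # rest)) = I" using sd by (simp add: set_decomp_def)
    have D: "\<forall>i < length (S1 # rest). \<forall>j < length (S1 # rest). i \<noteq> j \<longrightarrow> (S1 # rest) ! i \<inter> (S1 # rest) ! j = {}"
      using sd by (simp add: set_decomp_def)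
    show "strong_val sc F I (comp_map I (S1 # rest) fs)"
    proof (cases rest)
      case Nil
      then have "S1 = I" using U by simp
      moreover have "fs' = []" using len fs Nil by simp
      ultimately show ?thesis using sv1 fs Nil by (simp add: comp_map_single)
    next
      case (Cons S2 Ss)
      note rc = this
      have SI: "S1 \<subseteq> I" using U by auto
      have disj: "S1 \<inter> T = {}" if T: "T \<in> set rest" for T
      proof -
        obtain j where j: "j < length rest" "rest ! j = T" using T by (metis in_set_conv_nth)
        have "(S1 # rest) ! 0 \<inter> (S1 # rest) ! (Suc j) = {}" using D j by force
        then show ?thesis using j by simp
      qed
      have sd': "set_decomp (I - S1) rest"
        unfolding set_decomp_def
      proof
        show "\<forall>i<length rest. \<forall>j<length rest. i \<noteq> j \<longrightarrow> rest ! i \<inter> rest ! j = {}"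
        proof (intro allI impI)
          fix i j assume "i < length rest" "j < length rest" "i \<noteq> j"
          then have "(S1 # rest) ! Suc i \<inter> (S1 # rest) ! Suc j = {}" using D by force
          then show "rest ! i \<inter> rest ! j = {}" by simp
        qed
        show "\<Union>(set rest) = I - S1" using U disj by auto
      qed
      have len': "length fs' = length rest" using len fs by simp
      have sv': "\<forall>i < length rest. strong_val sc F (rest ! i) (fs' ! i)"
      proof (intro allI impI)
        fix i assume "i < length rest"
        then have "strong_val sc F ((S1 # rest) ! Suc i) (fs ! Suc i)" using sv by force
        then show "strong_val sc F (rest ! i) (fs' ! i)" using fs by simp
      qed
      have IH: "strong_val sc F (I - S1) (comp_map (I - S1) rest fs')"
        using Cons.IH fI sd' len' sv' Cons by blast
      have "strong_val sc F I (\<lambda>P. case cop I S1 P of None \<Rightarrow> 0 | Some (A, B) \<Rightarrow> f1 A * comp_map (I - S1) rest fs' B)"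
        by (rule delta_val[OF ka hs fI SI sv1 IH])
      moreover have "comp_map I (S1 # rest) fs = (\<lambda>P. case cop I S1 P of None \<Rightarrow> 0 | Some (A, B) \<Rightarrow> f1 A * comp_map (I - S1) rest fs' B)"
        unfolding rc fs by (simp add: comp_map_cons fun_eq_iff)
      ultimately show ?thesis by simp
    qed
  qed
qed

lemma sv_sum_fun:
  fixes sc :: "'k::field \<Rightarrow> 'r::ring_1 \<Rightarrow> 'r" and F :: "('e set \<times> ('e \<Rightarrow> real) set) set"
  assumes ka: "k_algebra sc" and H: "\<forall>j < n. strong_val sc F I (g j)"
  shows "strong_val sc F I (\<lambda>P. \<Sum>j < n. g j P)"
  unfolding strong_val_def
proof (intro allI impI)
  fix c :: "('e \<Rightarrow> real) set \<Rightarrow> 'k"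
  assume a1: "finite {P. c P \<noteq> 0}" and a2: "{P. c P \<noteq> 0} \<subseteq> basis F I"
    and a3: "\<forall>x. (\<Sum>P | c P \<noteq> 0. c P * (if x \<in> P then 1 else 0)) = 0"
  have "(\<Sum>P | c P \<noteq> 0. sc (c P) (\<Sum>j < n. g j P)) = (\<Sum>P | c P \<noteq> 0. \<Sum>j < n. sc (c P) (g j P))"
    by (simp add: sc_sum_r[OF ka])
  also have "\<dots> = (\<Sum>j < n. \<Sum>P | c P \<noteq> 0. sc (c P) (g j P))" by (rule sum.swap)
  also have "\<dots> = 0"
  proof (rule sum.neutral, rule ballI)
    fix j assume "j \<in> {..<n}"
    then have "strong_val sc F I (g j)" using H by simp
    then show "(\<Sum>P | c P \<noteq> 0. sc (c P) (g j P)) = 0" using a1 a2 a3 unfolding strong_val_def by blast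
  qed
  finally show "(\<Sum>P | c P \<noteq> 0. sc (c P) (\<Sum>j < n. g j P)) = 0" .
qed

theorem theoremB:
  fixes sc :: "'k::field \<Rightarrow> 'r::ring_1 \<Rightarrow> 'r"
    and F :: "('e set \<times> 'e poly) set"
    and I :: "'e set"
    and S :: "'e set list"
    and fs :: "('e poly \<Rightarrow> 'r) list"
  assumes "k_algebra sc"
    and "hopf_sub F"
    and "finite I"
    and "set_decomp I S"
    and "S \<noteq> []"
    and "length fs = length S"
    and "\<forall>i < length S. strong_val sc F (S ! i) (fs ! i)"
  shows "strong_val sc F I (comp_map I S fs) \<and>
    (\<forall>(n::nat) (Ss :: nat \<Rightarrow> 'e set list) (fss :: nat \<Rightarrow> ('e poly \<Rightarrow> 'r) list).
        (\<forall>j < n. val_data sc F I (Ss j) (fss j)) \<longrightarrow>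
        strong_val sc F I (\<lambda>P. \<Sum>j < n. comp_map I (Ss j) (fss j) P))"
proof
  show "strong_val sc F I (comp_map I S fs)"
    using main1[OF assms(1,2)] assms(3-7) by blast
  show "\<forall>(n::nat) (Ss :: nat \<Rightarrow> 'e set list) (fss :: nat \<Rightarrow> ('e poly \<Rightarrow> 'r) list).
        (\<forall>j < n. val_data sc F I (Ss j) (fss j)) \<longrightarrow>
        strong_val sc F I (\<lambda>P. \<Sum>j < n. comp_map I (Ss j) (fss j) P)"
  proof (intro allI impI)
    fix n and Ss :: "nat \<Rightarrow> 'e set list" and fss :: "nat \<Rightarrow> ('e poly \<Rightarrow> 'r) list"
    assume V: "\<forall>j < n. val_data sc F I (Ss j) (fss j)"
    have "\<forall>j < n. strong_val sc F I (comp_map I (Ss j) (fss j))"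
    proof (intro allI impI)
      fix j assume "j < n"
      then have "val_data sc F I (Ss j) (fss j)" using V by blast
      then show "strong_val sc F I (comp_map I (Ss j) (fss j))"
        using main1[OF assms(1,2), of "Ss j"] assms(3) unfolding val_data_def by blast
    qed
    then show "strong_val sc F I (\<lambda>P. \<Sum>j < n. comp_map I (Ss j) (fss j) P)"
      by (rule sv_sum_fun[OF assms(1)])
  qed
qed


end
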